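(* The 580-disk $X_{580}$ is a flag-no-square simplicial complex, and its boundary $\partial X_{580}$ is a 3-convex subcomplex of $X_{580}$.
   Context: $X_{600}$ denotes the boundary of the 600-cell (the regular 4-polytope with Schläfli symbol $\{3,3,5\}$), viewed as a simplicial complex triangulating $S^3$ (120 vertices, 600 tetrahedra, vertex links icosahedra). The 580-disk $X_{580}$ is the simplicial complex obtained from $X_{600}$ by deleting the open star of one vertex; it triangulates $B^3$ and $\partial X_{580}$ is the link of the deleted vertex (an icosahedron). A simplicial complex is flag-no-square if it is flag and every closed edge cycle of length 4 has a diagonal (an edge joining two opposite vertices of the cycle). A subcomplex $J\subset K$ is 3-convex if it is full and for any two vertices of $J$ at edge-path distance 2 in $K$, every edge path of length 2 in $K$ joining them lies in $J$. *)

theory Defs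
  imports "HOL-Analysis.Analysis"
begin

definition cverts :: "'a set set \<Rightarrow> 'a set" where
  "cverts K = \<Union>K"

definition cedge :: "'a set set \<Rightarrow> 'a \<Rightarrow> 'a \<Rightarrow> bool" where
  "cedge K u v \<longleftrightarrow> u \<noteq> v \<and> {u, v} \<in> K"

definition flag_complex :: "'a set set \<Rightarrow> bool" where
  "flag_complex K \<longleftrightarrow>
     (\<forall>S. finite S \<and> S \<noteq> {} \<and> S \<subseteq> cverts K \<and>
          (\<forall>u\<in>S. \<forall>v\<in>S. u \<noteq> v \<longrightarrow> cedge K u v) \<longrightarrow> S \<in> K)"

definition no_square :: "'a set set \<Rightarrow> bool" where
  "no_square K \<longleftrightarrow>
     (\<forall>a b c d. distinct [a, b, c, d] \<and> cedge K a b \<and> cedge K b c \<and> cedge K c d \<and> cedge K d a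
        \<longrightarrow> cedge K a c \<or> cedge K b d)"

definition flag_no_square :: "'a set set \<Rightarrow> bool" where
  "flag_no_square K \<longleftrightarrow> flag_complex K \<and> no_square K"

definition full_subcomplex :: "'a set set \<Rightarrow> 'a set set \<Rightarrow> bool" where
  "full_subcomplex J K \<longleftrightarrow> J \<subseteq> K \<and> (\<forall>\<sigma>\<in>K. \<sigma> \<subseteq> cverts J \<longrightarrow> \<sigma> \<in> J)"

definition dist2 :: "'a set set \<Rightarrow> 'a \<Rightarrow> 'a \<Rightarrow> bool" where
  "dist2 K u w \<longleftrightarrow> u \<noteq> w \<and> \<not> cedge K u w \<and> (\<exists>x. cedge K u x \<and> cedge K x w)"

definition three_convex :: "'a set set \<Rightarrow> 'a set set \<Rightarrow> bool" where
  "three_convex J K \<longleftrightarrow> full_subcomplex J K \<and>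
     (\<forall>u w x. u \<in> cverts J \<and> w \<in> cverts J \<and> dist2 K u w \<and> cedge K u x \<and> cedge K x w
        \<longrightarrow> x \<in> cverts J \<and> cedge J u x \<and> cedge J x w)"

definition vec4 :: "real \<Rightarrow> real \<Rightarrow> real \<Rightarrow> real \<Rightarrow> real^4" where
  "vec4 a b c d = (\<chi> i. if i = 1 then a else if i = 2 then b else if i = 3 then c else d)"

definition golden :: real where "golden = (1 + sqrt 5) / 2"

definition even_perms4 :: "nat list set" where
  "even_perms4 = {[0,1,2,3],[0,2,3,1],[0,3,1,2],[1,0,3,2],[1,2,0,3],[1,3,2,0],
                  [2,0,1,3],[2,1,3,0],[2,3,0,1],[3,0,2,1],[3,1,0,2],[3,2,1,0]}"

definition V600 :: "(real^4) set" where
  "V600 =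
     {vec4 (s*a) (s*b) (s*c) (s*d) | s a b c d. s \<in> {1, -1} \<and>
         [a,b,c,d] \<in> {[1,0,0,0],[0,1,0,0],[0,0,1,0],[0,0,0,1]}}
   \<union> {vec4 a b c d | a b c d. a \<in> {1/2, -1/2} \<and> b \<in> {1/2, -1/2} \<and> c \<in> {1/2, -1/2} \<and> d \<in> {1/2, -1/2}}
   \<union> {vec4 (s0 * base ! (p!0)) (s1 * base ! (p!1)) (s2 * base ! (p!2)) (s3 * base ! (p!3))
       | s0 s1 s2 s3 p base. s0 \<in> {1,-1} \<and> s1 \<in> {1,-1} \<and> s2 \<in> {1,-1} \<and> s3 \<in> {1,-1} \<and>
         p \<in> even_perms4 \<and> base = [golden/2, 1/2, 1/(2*golden), 0]}"

definition X600 :: "(real^4) set set" where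
  "X600 = {V600 \<inter> F | F. F face_of convex hull V600 \<and> F \<noteq> {} \<and> F \<noteq> convex hull V600}"

text \<open>Delete the open star of vertex v.\<close>
definition X580 :: "real^4 \<Rightarrow> (real^4) set set" where
  "X580 v = {\<sigma> \<in> X600. v \<notin> \<sigma>}"

text \<open>Boundary of X580 = link of the deleted vertex v in X600.\<close>
definition bdry580 :: "real^4 \<Rightarrow> (real^4) set set" where
  "bdry580 v = {\<sigma> \<in> X600. v \<notin> \<sigma> \<and> insert v \<sigma> \<in> X600}"

end

theory Submission
  imports Defs
begin

lemma vec4_nth[simp]: "vec4 a b c d $ 1 = a" "vec4 a b c d $ 2 = b" "vec4 a b c d $ 3 = c" "vec4 a b c d $ 4 = d"
  by (simp_all add: vec4_def)

lemma vec4_eq_iff: "x = y \<longleftrightarrow> x$1 = y$1 \<and> x$2 = y$2 \<and> x$3 = y$3 \<and> (x::real^4)$4 = y$4"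
  by (metis (mono_tags) vec_eq_iff exhaust_4)

lemma vec4_eq[simp]: "vec4 a b c d = vec4 a' b' c' d' \<longleftrightarrow> a = a' \<and> b = b' \<and> c = c' \<and> d = d'"
  by (simp add: vec4_eq_iff)

lemma inner4: "inner (x::real^4) y = x$1*y$1 + x$2*y$2 + x$3*y$3 + x$4*y$4"
  by (simp add: inner_vec_def sum_4)

lemma golden_sq: "golden * golden = golden + 1"
proof -
  have "sqrt 5 * sqrt 5 = 5" by simp
  then show ?thesis unfolding golden_def by (simp add: field_simps)
qed

lemma sqrt5_bounds: "2.236 < sqrt 5" "sqrt 5 < 2.2361"
proof -
  show "2.236 < sqrt 5" by (rule real_less_rsqrt) (simp add: power2_eq_square)
  have "sqrt 5 < sqrt (2.2361^2)" by (subst real_sqrt_less_iff) (simp add: power2_eq_square)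
  then show "sqrt 5 < 2.2361" by simp
qed

lemma golden_bounds: "1.618 < golden" "golden < 1.61805"
  using sqrt5_bounds unfolding golden_def by simp_all

lemma inv_golden: "1/(2*golden) = (golden - 1)/2"
proof -
  have "golden \<noteq> 0" using golden_bounds by simp
  then show ?thesis using golden_sq by (simp add: field_simps)
qed

lemma five_dvd_sq: fixes a :: int assumes "5 dvd a^2" shows "5 dvd a"
proof -
  have m: "a mod 5 \<in> {0,1,2,3,4}" by auto
  have "(a^2) mod 5 = ((a mod 5)^2) mod 5" by (simp add: power_mod)
  with assms have "((a mod 5)^2) mod 5 = 0" by simp
  with m have "a mod 5 = 0" by (auto simp: power2_eq_square)
  then show ?thesis by auto
qed

lemma sq5_zero: fixes n a :: int shows "a^2 = 5 * n^2 \<Longrightarrow> n = 0"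
proof (induction "nat \<bar>n\<bar>" arbitrary: n a rule: less_induct)
  case less
  from less.prems have "5 dvd a^2" by simp
  then have "5 dvd a" by (rule five_dvd_sq)
  then obtain k where k: "a = 5 * k" by auto
  with less.prems have n2: "n^2 = 5 * k^2" by (simp add: power2_eq_square)
  show "n = 0"
  proof (rule ccontr)
    assume "n \<noteq> 0"
    have "k^2 < n^2"
    proof -
      have "0 < n^2" using \<open>n \<noteq> 0\<close> by simp
      then show ?thesis using n2 by linarith
    qed
    then have "\<bar>k\<bar> < \<bar>n\<bar>" by (metis abs_le_square_iff not_less power2_abs)
    then have "nat \<bar>k\<bar> < nat \<bar>n\<bar>" by simp
    from less.hyps[OF this n2] have "k = 0" .
    then show False using n2 \<open>n \<noteq> 0\<close> by simp
  qed
qed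

lemma golden_indep: fixes m n :: int assumes "of_int m + of_int n * golden = 0" shows "m = 0 \<and> n = 0"
proof -
  have "of_int (2*m + n) + of_int n * sqrt 5 = 0"
    using assms unfolding golden_def by (simp add: field_simps)
  then have e: "of_int n * sqrt 5 = - of_int (2*m+n)" by simp
  then have "(of_int n * sqrt 5)^2 = (- of_int (2*m+n))^2" by (rule arg_cong)
  then have "(of_int n * sqrt 5)^2 = (of_int (2*m+n))^2" by (simp only: power2_minus)
  moreover have "(of_int n * sqrt 5)^2 = real_of_int (n^2 * 5)" by (simp add: power_mult_distrib)
  ultimately have "real_of_int (n^2 * 5) = real_of_int ((2*m+n)^2)" by simp
  then have "(2*m+n)^2 = 5 * n^2" by (simp only: of_int_eq_iff mult.commute)
  then have "n = 0" by (rule sq5_zero)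
  with e show ?thesis by simp
qed

section \<open>Quaternions on real^4\<close>

definition qmult :: "real^4 \<Rightarrow> real^4 \<Rightarrow> real^4" where
 "qmult x y = vec4 (x$1*y$1 - x$2*y$2 - x$3*y$3 - x$4*y$4)
                   (x$1*y$2 + x$2*y$1 + x$3*y$4 - x$4*y$3)
                   (x$1*y$3 - x$2*y$4 + x$3*y$1 + x$4*y$2)
                   (x$1*y$4 + x$2*y$3 - x$3*y$2 + x$4*y$1)"

definition qconj :: "real^4 \<Rightarrow> real^4" where "qconj x = vec4 (x$1) (-x$2) (-x$3) (-x$4)"

definition e1 :: "real^4" where "e1 = vec4 1 0 0 0"

lemma qmult_assoc: "qmult (qmult x y) z = qmult x (qmult y z)"
  by (simp add: qmult_def vec4_eq_iff algebra_simps)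

lemma inner_qmult: "inner (qmult u x) (qmult u y) = inner u u * inner x y"
  by (simp add: qmult_def inner4 algebra_simps)

lemma qconj_mult: "qmult (qconj u) u = (inner u u) *\<^sub>R e1"
  by (simp add: qmult_def qconj_def e1_def inner4 vec4_eq_iff algebra_simps power2_eq_square)

lemma mult_qconj: "qmult u (qconj u) = (inner u u) *\<^sub>R e1"
  by (simp add: qmult_def qconj_def e1_def inner4 vec4_eq_iff algebra_simps power2_eq_square)

lemma qmult_e1_left[simp]: "qmult e1 x = x"
  by (simp add: qmult_def e1_def vec4_eq_iff)

lemma qmult_e1_right[simp]: "qmult x e1 = x"
  by (simp add: qmult_def e1_def vec4_eq_iff)

lemma qmult_add_right: "qmult u (x + y) = qmult u x + qmult u y"
  by (simp add: qmult_def vec4_eq_iff algebra_simps)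

lemma qmult_scaleR_right: "qmult u (c *\<^sub>R x) = c *\<^sub>R qmult u x"
  by (simp add: qmult_def vec4_eq_iff algebra_simps)

lemma qmult_scaleR_left: "qmult (c *\<^sub>R u) x = c *\<^sub>R qmult u x"
  by (simp add: qmult_def vec4_eq_iff algebra_simps)

lemma inner_qconj: "inner (qconj u) (qconj u) = inner u u"
  by (simp add: qconj_def inner4)

lemma qmult_sum_list: "qmult u (sum_list (map f l)) = sum_list (map (\<lambda>x. qmult u (f x)) l)"
proof (induction l)
  case Nil
  have "qmult u 0 = 0" by (simp add: qmult_def vec4_eq_iff)
  then show ?case by simp
next
  case (Cons a l)
  then show ?case by (simp add: qmult_add_right)
qed

section \<open>Integer model of Z[phi]\<close>

type_synonym zp = "int \<times> int"
type_synonym qv = "zp \<times> zp \<times> zp \<times> zp"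

fun zadd :: "zp \<Rightarrow> zp \<Rightarrow> zp" where "zadd (a,b) (c,d) = (a+c, b+d)"
fun zsub :: "zp \<Rightarrow> zp \<Rightarrow> zp" where "zsub (a,b) (c,d) = (a-c, b-d)"
fun zneg :: "zp \<Rightarrow> zp" where "zneg (a,b) = (-a, -b)"
fun zmul :: "zp \<Rightarrow> zp \<Rightarrow> zp" where "zmul (a,b) (c,d) = (a*c + b*d, a*d + b*c + b*d)"
fun zsm :: "int \<Rightarrow> zp \<Rightarrow> zp" where "zsm s (a,b) = (s*a, s*b)"
fun zr :: "zp \<Rightarrow> real" where "zr (p,q) = of_int p + of_int q * golden"

lemma zr_add[simp]: "zr (zadd x y) = zr x + zr y"
  by (cases x; cases y) (simp add: algebra_simps)
lemma zr_sub[simp]: "zr (zsub x y) = zr x - zr y"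
  by (cases x; cases y) (simp add: algebra_simps)
lemma zr_neg[simp]: "zr (zneg x) = - zr x"
  by (cases x) (simp add: algebra_simps)
lemma zr_sm[simp]: "zr (zsm s x) = of_int s * zr x"
  by (cases x) (simp add: algebra_simps)
lemma zr_mul[simp]: "zr (zmul x y) = zr x * zr y"
proof (cases x; cases y)
  fix a b c d assume xy: "x = (a,b)" "y = (c,d)"
  have "zr x * zr y = of_int a * of_int c + (of_int a * of_int d + of_int b * of_int c) * golden
     + of_int b * of_int d * (golden * golden)" by (simp add: xy algebra_simps)
  also have "\<dots> = zr (zmul x y)" by (simp add: xy golden_sq algebra_simps)
  finally show ?thesis by simp
qed

lemma zr_inj: "zr x = zr y \<Longrightarrow> x = y"
proof (cases x; cases y)
  fix a b c d assume xy: "x = (a,b)" "y = (c,d)" and e: "zr x = zr y"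
  then have "of_int (a - c) + of_int (b - d) * golden = 0" by (simp add: algebra_simps)
  from golden_indep[OF this] show ?thesis using xy by simp
qed

fun qm :: "qv \<Rightarrow> qv \<Rightarrow> qv" where
 "qm (a1,b1,c1,d1) (a2,b2,c2,d2) =
   (zsub (zsub (zsub (zmul a1 a2) (zmul b1 b2)) (zmul c1 c2)) (zmul d1 d2),
    zsub (zadd (zadd (zmul a1 b2) (zmul b1 a2)) (zmul c1 d2)) (zmul d1 c2),
    zadd (zadd (zsub (zmul a1 c2) (zmul b1 d2)) (zmul c1 a2)) (zmul d1 b2),
    zadd (zsub (zadd (zmul a1 d2) (zmul b1 c2)) (zmul c1 b2)) (zmul d1 a2))"
fun qdbl :: "qv \<Rightarrow> qv" where "qdbl (a,b,c,d) = (zsm 2 a, zsm 2 b, zsm 2 c, zsm 2 d)"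
fun zhalf :: "zp \<Rightarrow> zp" where "zhalf (a,b) = (a div 2, b div 2)"
fun qhalf :: "qv \<Rightarrow> qv" where "qhalf (a,b,c,d) = (zhalf a, zhalf b, zhalf c, zhalf d)"
fun qadd :: "qv \<Rightarrow> qv \<Rightarrow> qv" where "qadd (a,b,c,d) (a',b',c',d') = (zadd a a', zadd b b', zadd c c', zadd d d')"
definition qzero :: "qv" where "qzero = ((0,0),(0,0),(0,0),(0,0))"
fun zsc :: "zp \<Rightarrow> qv \<Rightarrow> qv" where "zsc z (a,b,c,d) = (zmul z a, zmul z b, zmul z c, zmul z d)"
fun qcj :: "qv \<Rightarrow> qv" where "qcj (a,b,c,d) = (a, zneg b, zneg c, zneg d)"
fun zdot :: "qv \<Rightarrow> qv \<Rightarrow> zp" where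
  "zdot (a1,b1,c1,d1) (a2,b2,c2,d2) = zadd (zadd (zadd (zmul a1 a2) (zmul b1 b2)) (zmul c1 c2)) (zmul d1 d2)"

fun qI :: "qv \<Rightarrow> real^4" where "qI (a,b,c,d) = vec4 (zr a/2) (zr b/2) (zr c/2) (zr d/2)"

lemma qv_cases: obtains a b c d where "(x::qv) = (a,b,c,d)"
  by (metis prod_cases4)

lemma qI_qm: "qmult (qI x) (qI y) = (1/2) *\<^sub>R qI (qm x y)"
  by (cases x rule: qv_cases; cases y rule: qv_cases) (simp add: qmult_def vec4_eq_iff field_simps)

lemma qI_qdbl: "qI (qdbl x) = 2 *\<^sub>R qI x"
  by (cases x rule: qv_cases) (simp add: vec4_eq_iff)

lemma qI_add: "qI (qadd x y) = qI x + qI y"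
  by (cases x rule: qv_cases; cases y rule: qv_cases) (simp add: vec4_eq_iff add_divide_distrib)

lemma qI_zero: "qI qzero = 0"
  by (simp add: qzero_def vec4_eq_iff)

lemma qI_zsc: "qI (zsc c x) = zr c *\<^sub>R qI x"
  by (cases x rule: qv_cases) (simp add: vec4_eq_iff)

lemma qI_qcj: "qI (qcj x) = qconj (qI x)"
  by (cases x rule: qv_cases) (simp add: qconj_def)

lemma inner_qI: "inner (qI x) (qI y) = zr (zdot x y) / 4"
  by (cases x rule: qv_cases; cases y rule: qv_cases) (simp add: inner4 field_simps)

lemma qI_mult_half: "qm x y = qdbl z \<Longrightarrow> qmult (qI x) (qI y) = qI z"
  by (simp add: qI_qm qI_qdbl)

definition qs :: qv where "qs = ((1,0),(1,0),(1,0),(1,0))"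
definition qt :: qv where "qt = ((0,1),(1,0),(-1,1),(0,0))"
definition one :: qv where "one = ((2,0),(0,0),(0,0),(0,0))"

definition bfsL :: "(qv \<times> bool \<times> qv) list" where
  "bfsL = [(((1,0),(1,0),(1,0),(1,0)),True,((2,0),(0,0),(0,0),(0,0))),
    (((0,1),(1,0),(-1,1),(0,0)),False,((2,0),(0,0),(0,0),(0,0))),
    (((-1,0),(1,0),(1,0),(1,0)),True,((1,0),(1,0),(1,0),(1,0))),
    (((0,0),(0,1),(-1,1),(1,0)),False,((1,0),(1,0),(1,0),(1,0))),
    (((0,0),(1,0),(0,1),(-1,1)),True,((0,1),(1,0),(-1,1),(0,0))),
    (((-1,1),(0,1),(1,0),(0,0)),False,((0,1),(1,0),(-1,1),(0,0))),
    (((-2,0),(0,0),(0,0),(0,0)),True,((-1,0),(1,0),(1,0),(1,0))),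
    (((0,-1),(-1,1),(0,0),(1,0)),False,((-1,0),(1,0),(1,0),(1,0))),
    (((0,-1),(1,0),(-1,1),(0,0)),True,((0,0),(0,1),(-1,1),(1,0))),
    (((-1,0),(0,1),(0,0),(-1,1)),False,((0,0),(0,1),(-1,1),(1,0))),
    (((0,-1),(0,0),(1,0),(-1,1)),True,((0,0),(1,0),(0,1),(-1,1))),
    (((-1,0),(-1,1),(0,1),(0,0)),True,((-1,1),(0,1),(1,0),(0,0))),
    (((1,-1),(0,1),(1,0),(0,0)),False,((-1,1),(0,1),(1,0),(0,0))),
    (((-1,0),(-1,0),(-1,0),(-1,0)),True,((-2,0),(0,0),(0,0),(0,0))),
    (((0,-1),(-1,0),(1,-1),(0,0)),False,((-2,0),(0,0),(0,0),(0,0))),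
    (((0,-1),(0,0),(-1,0),(1,-1)),True,((0,-1),(-1,1),(0,0),(1,0))),
    (((0,-1),(0,0),(-1,0),(-1,1)),False,((0,-1),(-1,1),(0,0),(1,0))),
    (((0,-1),(1,-1),(0,0),(-1,0)),True,((0,-1),(1,0),(-1,1),(0,0))),
    (((0,-1),(-1,1),(0,0),(-1,0)),True,((-1,0),(0,1),(0,0),(-1,1))),
    (((0,-1),(1,0),(1,-1),(0,0)),False,((-1,0),(0,1),(0,0),(-1,1))),
    (((0,-1),(1,-1),(0,0),(1,0)),False,((0,-1),(0,0),(1,0),(-1,1))),
    (((0,-1),(-1,0),(-1,1),(0,0)),True,((-1,0),(-1,1),(0,1),(0,0))),
    (((0,-1),(0,0),(1,0),(1,-1)),True,((1,-1),(0,1),(1,0),(0,0))),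
    (((1,0),(-1,0),(-1,0),(-1,0)),True,((-1,0),(-1,0),(-1,0),(-1,0))),
    (((0,0),(0,-1),(1,-1),(-1,0)),False,((-1,0),(-1,0),(-1,0),(-1,0))),
    (((0,0),(-1,0),(0,-1),(1,-1)),True,((0,-1),(-1,0),(1,-1),(0,0))),
    (((1,-1),(0,-1),(-1,0),(0,0)),False,((0,-1),(-1,0),(1,-1),(0,0))),
    (((0,0),(1,-1),(-1,0),(0,-1)),True,((0,-1),(0,0),(-1,0),(1,-1))),
    (((1,-1),(0,0),(0,-1),(-1,0)),True,((0,-1),(0,0),(-1,0),(-1,1))),
    (((-1,0),(1,-1),(0,-1),(0,0)),False,((0,-1),(0,0),(-1,0),(-1,1))),
    (((-1,0),(0,-1),(0,0),(1,-1)),False,((0,-1),(1,-1),(0,0),(-1,0))),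
    (((1,-1),(-1,0),(0,0),(0,-1)),True,((0,-1),(-1,1),(0,0),(-1,0))),
    (((-1,0),(0,0),(1,-1),(0,-1)),True,((0,-1),(1,0),(1,-1),(0,0))),
    (((-1,0),(-1,0),(-1,0),(1,0)),False,((0,-1),(1,-1),(0,0),(1,0))),
    (((-1,0),(0,-1),(0,0),(-1,1)),False,((0,-1),(-1,0),(-1,1),(0,0))),
    (((0,1),(1,-1),(0,0),(-1,0)),False,((1,0),(-1,0),(-1,0),(-1,0))),
    (((0,1),(-1,0),(1,-1),(0,0)),True,((0,0),(0,-1),(1,-1),(-1,0))),
    (((1,0),(0,-1),(0,0),(1,-1)),False,((0,0),(0,-1),(1,-1),(-1,0))),
    (((0,1),(0,0),(-1,0),(1,-1)),True,((0,0),(-1,0),(0,-1),(1,-1))),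
    (((1,0),(1,-1),(0,-1),(0,0)),True,((1,-1),(0,-1),(-1,0),(0,0))),
    (((-1,1),(0,-1),(-1,0),(0,0)),False,((1,-1),(0,-1),(-1,0),(0,0))),
    (((-1,1),(-1,0),(0,0),(0,-1)),False,((0,0),(1,-1),(-1,0),(0,-1))),
    (((1,0),(0,0),(1,-1),(0,-1)),True,((1,-1),(0,0),(0,-1),(-1,0))),
    (((-1,1),(0,0),(0,-1),(-1,0)),True,((-1,0),(1,-1),(0,-1),(0,0))),
    (((0,0),(-2,0),(0,0),(0,0)),False,((-1,0),(0,-1),(0,0),(1,-1))),
    (((0,0),(0,-1),(-1,1),(-1,0)),False,((1,-1),(-1,0),(0,0),(0,-1))),
    (((0,0),(0,0),(-2,0),(0,0)),True,((-1,0),(-1,0),(-1,0),(1,0))),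
    (((0,0),(-1,0),(0,-1),(-1,1)),False,((-1,0),(-1,0),(-1,0),(1,0))),
    (((0,0),(0,-1),(1,-1),(1,0)),False,((-1,0),(0,-1),(0,0),(-1,1))),
    (((0,1),(0,0),(1,0),(-1,1)),True,((0,1),(1,-1),(0,0),(-1,0))),
    (((0,1),(0,0),(1,0),(1,-1)),False,((0,1),(1,-1),(0,0),(-1,0))),
    (((0,1),(-1,1),(0,0),(1,0)),True,((0,1),(-1,0),(1,-1),(0,0))),
    (((0,1),(1,-1),(0,0),(1,0)),True,((1,0),(0,-1),(0,0),(1,-1))),
    (((0,1),(-1,0),(-1,1),(0,0)),False,((1,0),(0,-1),(0,0),(1,-1))),
    (((0,1),(-1,1),(0,0),(-1,0)),False,((0,1),(0,0),(-1,0),(1,-1))),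
    (((0,1),(1,0),(1,-1),(0,0)),True,((1,0),(1,-1),(0,-1),(0,0))),
    (((0,1),(0,0),(-1,0),(-1,1)),True,((-1,1),(0,-1),(-1,0),(0,0))),
    (((1,0),(-1,0),(1,0),(-1,0)),False,((-1,1),(-1,0),(0,0),(0,-1))),
    (((1,0),(0,0),(-1,1),(0,-1)),False,((1,0),(0,0),(1,-1),(0,-1))),
    (((1,0),(-1,0),(-1,0),(1,0)),True,((0,0),(-2,0),(0,0),(0,0))),
    (((1,0),(0,-1),(0,0),(-1,1)),False,((0,0),(-2,0),(0,0),(0,0))),
    (((-1,1),(0,-1),(1,0),(0,0)),False,((0,0),(0,-1),(-1,1),(-1,0))),
    (((1,0),(1,0),(-1,0),(-1,0)),True,((0,0),(0,0),(-2,0),(0,0))),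
    (((1,0),(-1,1),(0,-1),(0,0)),True,((0,0),(-1,0),(0,-1),(-1,1))),
    (((-1,1),(0,0),(0,-1),(1,0)),True,((0,0),(0,-1),(1,-1),(1,0))),
    (((0,0),(-1,1),(1,0),(0,1)),True,((0,1),(0,0),(1,0),(-1,1))),
    (((-1,1),(0,0),(0,1),(1,0)),True,((0,1),(0,0),(1,0),(1,-1))),
    (((1,0),(-1,1),(0,1),(0,0)),False,((0,1),(0,0),(1,0),(1,-1))),
    (((1,0),(0,1),(0,0),(-1,1)),False,((0,1),(-1,1),(0,0),(1,0))),
    (((-1,1),(1,0),(0,0),(0,1)),True,((0,1),(1,-1),(0,0),(1,0))),
    (((1,0),(0,0),(-1,1),(0,1)),True,((0,1),(-1,0),(-1,1),(0,0))),
    (((1,0),(1,0),(1,0),(-1,0)),False,((0,1),(-1,1),(0,0),(-1,0))),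
    (((1,0),(0,1),(0,0),(1,-1)),False,((0,1),(1,0),(1,-1),(0,0))),
    (((1,0),(-1,0),(1,0),(1,0)),True,((1,0),(-1,0),(1,0),(-1,0))),
    (((1,0),(1,-1),(0,1),(0,0)),False,((1,0),(-1,0),(1,0),(-1,0))),
    (((-1,1),(0,0),(0,1),(-1,0)),False,((1,0),(0,0),(-1,1),(0,-1))),
    (((1,0),(1,0),(-1,0),(1,0)),True,((1,0),(-1,0),(-1,0),(1,0))),
    (((1,0),(0,0),(1,-1),(0,1)),True,((1,0),(0,-1),(0,0),(-1,1))),
    (((-1,1),(-1,0),(0,0),(0,1)),True,((-1,1),(0,-1),(1,0),(0,0))),
    (((-1,1),(1,0),(0,0),(0,-1)),False,((1,0),(1,0),(-1,0),(-1,0))),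
    (((-1,1),(0,1),(-1,0),(0,0)),True,((-1,1),(0,0),(0,-1),(1,0))),
    (((1,-1),(1,0),(0,0),(0,1)),False,((0,0),(-1,1),(1,0),(0,1))),
    (((-1,0),(0,0),(-1,1),(0,1)),True,((-1,1),(0,0),(0,1),(1,0))),
    (((1,-1),(0,0),(0,1),(1,0)),True,((1,0),(-1,1),(0,1),(0,0))),
    (((0,0),(2,0),(0,0),(0,0)),False,((1,0),(0,1),(0,0),(-1,1))),
    (((0,0),(0,1),(1,-1),(1,0)),False,((-1,1),(1,0),(0,0),(0,1))),
    (((0,0),(0,0),(2,0),(0,0)),True,((1,0),(1,0),(1,0),(-1,0))),
    (((0,0),(1,0),(0,1),(1,-1)),False,((1,0),(1,0),(1,0),(-1,0))),
    (((0,0),(0,1),(-1,1),(-1,0)),False,((1,0),(0,1),(0,0),(1,-1))),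
    (((0,0),(0,0),(0,0),(2,0)),True,((1,0),(-1,0),(1,0),(1,0))),
    (((0,0),(1,-1),(1,0),(0,1)),True,((1,0),(1,-1),(0,1),(0,0))),
    (((0,0),(-1,0),(0,1),(-1,1)),True,((-1,1),(0,0),(0,1),(-1,0))),
    (((0,0),(-1,1),(-1,0),(0,1)),True,((-1,1),(-1,0),(0,0),(0,1))),
    (((0,0),(-1,1),(1,0),(0,-1)),False,((-1,1),(1,0),(0,0),(0,-1))),
    (((0,0),(0,1),(1,-1),(-1,0)),False,((-1,1),(0,1),(-1,0),(0,0))),
    (((-1,0),(1,0),(-1,0),(1,0)),False,((1,-1),(1,0),(0,0),(0,1))),
    (((-1,0),(0,0),(1,-1),(0,1)),False,((-1,0),(0,0),(-1,1),(0,1))),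
    (((-1,0),(1,0),(1,0),(-1,0)),True,((0,0),(2,0),(0,0),(0,0))),
    (((-1,0),(0,1),(0,0),(1,-1)),False,((0,0),(2,0),(0,0),(0,0))),
    (((1,-1),(0,1),(-1,0),(0,0)),False,((0,0),(0,1),(1,-1),(1,0))),
    (((-1,0),(-1,0),(1,0),(1,0)),True,((0,0),(0,0),(2,0),(0,0))),
    (((-1,0),(1,-1),(0,1),(0,0)),True,((0,0),(1,0),(0,1),(1,-1))),
    (((1,-1),(0,0),(0,1),(-1,0)),True,((0,0),(0,1),(-1,1),(-1,0))),
    (((1,-1),(-1,0),(0,0),(0,1)),True,((0,0),(-1,0),(0,1),(-1,1))),
    (((0,0),(1,0),(0,-1),(-1,1)),False,((0,0),(-1,1),(-1,0),(0,1))),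
    (((0,0),(-1,0),(0,1),(1,-1)),True,((0,0),(-1,1),(1,0),(0,-1))),
    (((1,-1),(1,0),(0,0),(0,-1)),False,((0,0),(0,1),(1,-1),(-1,0))),
    (((-1,0),(1,0),(-1,0),(-1,0)),True,((-1,0),(1,0),(-1,0),(1,0))),
    (((-1,0),(-1,1),(0,-1),(0,0)),False,((-1,0),(1,0),(-1,0),(1,0))),
    (((1,-1),(0,0),(0,-1),(1,0)),False,((-1,0),(0,0),(1,-1),(0,1))),
    (((-1,0),(-1,0),(1,0),(-1,0)),True,((-1,0),(1,0),(1,0),(-1,0))),
    (((-1,0),(0,0),(-1,1),(0,-1)),True,((-1,0),(0,1),(0,0),(1,-1))),
    (((1,-1),(0,-1),(1,0),(0,0)),True,((1,-1),(0,0),(0,1),(-1,0))),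
    (((0,0),(1,-1),(-1,0),(0,1)),False,((1,-1),(-1,0),(0,0),(0,1))),
    (((0,0),(1,0),(0,-1),(1,-1)),False,((0,0),(1,0),(0,-1),(-1,1))),
    (((0,0),(0,-1),(-1,1),(1,0)),True,((0,0),(-1,0),(0,1),(1,-1))),
    (((0,0),(1,-1),(1,0),(0,-1)),True,((1,-1),(1,0),(0,0),(0,-1))),
    (((0,0),(0,0),(0,0),(-2,0)),True,((-1,0),(1,0),(-1,0),(-1,0))),
    (((0,0),(-1,1),(-1,0),(0,-1)),True,((-1,0),(-1,1),(0,-1),(0,0)))]"

definition N1L :: "qv list" where
  "N1L = [((0,1),(1,0),(-1,1),(0,0)),
    ((0,1),(1,-1),(0,0),(-1,0)),
    ((0,1),(-1,0),(1,-1),(0,0)),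
    ((0,1),(0,0),(-1,0),(1,-1)),
    ((0,1),(0,0),(1,0),(-1,1)),
    ((0,1),(0,0),(1,0),(1,-1)),
    ((0,1),(-1,1),(0,0),(1,0)),
    ((0,1),(1,-1),(0,0),(1,0)),
    ((0,1),(-1,0),(-1,1),(0,0)),
    ((0,1),(-1,1),(0,0),(-1,0)),
    ((0,1),(1,0),(1,-1),(0,0)),
    ((0,1),(0,0),(-1,0),(-1,1))]"

definition certL :: "(qv \<times> (zp \<times> qv) list) list" where
  "certL = [(((0,0),(2,0),(0,0),(0,0)),[((1,0),((0,1),(1,0),(-1,1),(0,0))),((-1,1),((-1,1),(0,1),(-1,0),(0,0)))]),
    (((0,0),(0,0),(2,0),(0,0)),[((1,0),((0,1),(0,0),(1,0),(-1,1))),((-1,1),((-1,1),(0,0),(0,1),(-1,0)))]),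
    (((0,0),(0,0),(0,0),(2,0)),[((1,0),((0,1),(-1,1),(0,0),(1,0))),((-1,1),((-1,1),(-1,0),(0,0),(0,1)))]),
    (((-2,0),(0,0),(0,0),(0,0)),[]),
    (((0,0),(-2,0),(0,0),(0,0)),[((1,0),((0,1),(-1,0),(-1,1),(0,0))),((-1,1),((-1,1),(0,-1),(-1,0),(0,0)))]),
    (((0,0),(0,0),(-2,0),(0,0)),[((1,0),((0,1),(0,0),(-1,0),(-1,1))),((-1,1),((-1,1),(0,0),(0,-1),(-1,0)))]),
    (((0,0),(0,0),(0,0),(-2,0)),[((1,0),((0,1),(-1,1),(0,0),(-1,0))),((-1,1),((-1,1),(-1,0),(0,0),(0,-1)))]),
    (((1,0),(1,0),(1,0),(1,0)),[((-1,1),((0,1),(1,0),(-1,1),(0,0))),((-1,1),((0,1),(-1,1),(0,0),(1,0))),((-1,1),((0,1),(0,0),(1,0),(-1,1)))]),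
    (((1,0),(1,0),(1,0),(-1,0)),[((-1,1),((0,1),(1,0),(-1,1),(0,0))),((-1,1),((0,1),(-1,1),(0,0),(-1,0))),((-1,1),((0,1),(0,0),(1,0),(1,-1)))]),
    (((1,0),(1,0),(-1,0),(1,0)),[((-1,1),((0,1),(-1,1),(0,0),(1,0))),((-1,1),((0,1),(1,0),(1,-1),(0,0))),((-1,1),((0,1),(0,0),(-1,0),(-1,1)))]),
    (((1,0),(1,0),(-1,0),(-1,0)),[((-1,1),((0,1),(-1,1),(0,0),(-1,0))),((-1,1),((0,1),(1,0),(1,-1),(0,0))),((-1,1),((0,1),(0,0),(-1,0),(1,-1)))]),
    (((1,0),(-1,0),(1,0),(1,0)),[((-1,1),((0,1),(0,0),(1,0),(-1,1))),((-1,1),((0,1),(-1,0),(-1,1),(0,0))),((-1,1),((0,1),(1,-1),(0,0),(1,0)))]),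
    (((1,0),(-1,0),(1,0),(-1,0)),[((-1,1),((0,1),(0,0),(1,0),(1,-1))),((-1,1),((0,1),(-1,0),(-1,1),(0,0))),((-1,1),((0,1),(1,-1),(0,0),(-1,0)))]),
    (((1,0),(-1,0),(-1,0),(1,0)),[((-1,1),((0,1),(0,0),(-1,0),(-1,1))),((-1,1),((0,1),(1,-1),(0,0),(1,0))),((-1,1),((0,1),(-1,0),(1,-1),(0,0)))]),
    (((1,0),(-1,0),(-1,0),(-1,0)),[((-1,1),((0,1),(0,0),(-1,0),(1,-1))),((-1,1),((0,1),(1,-1),(0,0),(-1,0))),((-1,1),((0,1),(-1,0),(1,-1),(0,0)))]),
    (((-1,0),(1,0),(1,0),(1,0)),[((1,0),((1,0),(1,0),(1,0),(1,0)))]),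
    (((-1,0),(1,0),(1,0),(-1,0)),[((1,0),((1,0),(1,0),(1,0),(-1,0)))]),
    (((-1,0),(1,0),(-1,0),(1,0)),[((1,0),((1,0),(1,0),(-1,0),(1,0)))]),
    (((-1,0),(1,0),(-1,0),(-1,0)),[((1,0),((1,0),(1,0),(-1,0),(-1,0)))]),
    (((-1,0),(-1,0),(1,0),(1,0)),[((1,0),((1,0),(-1,0),(1,0),(1,0)))]),
    (((-1,0),(-1,0),(1,0),(-1,0)),[((1,0),((1,0),(-1,0),(1,0),(-1,0)))]),
    (((-1,0),(-1,0),(-1,0),(1,0)),[((1,0),((1,0),(-1,0),(-1,0),(1,0)))]),
    (((-1,0),(-1,0),(-1,0),(-1,0)),[((1,0),((1,0),(-1,0),(-1,0),(-1,0)))]),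
    (((1,0),(0,1),(0,0),(-1,1)),[((-1,1),((0,1),(1,0),(-1,1),(0,0))),((-1,1),((0,1),(-1,1),(0,0),(1,0))),((-1,1),((0,1),(1,0),(1,-1),(0,0)))]),
    (((1,0),(-1,1),(0,1),(0,0)),[((-1,1),((0,1),(1,0),(-1,1),(0,0))),((-1,1),((0,1),(0,0),(1,0),(-1,1))),((-1,1),((0,1),(0,0),(1,0),(1,-1)))]),
    (((1,0),(0,0),(-1,1),(0,1)),[((-1,1),((0,1),(-1,1),(0,0),(1,0))),((-1,1),((0,1),(0,0),(1,0),(-1,1))),((-1,1),((0,1),(1,-1),(0,0),(1,0)))]),
    (((-1,1),(0,1),(1,0),(0,0)),[((0,1),((0,1),(1,0),(-1,1),(0,0)))]),
    (((-1,1),(1,0),(0,0),(0,1)),[((0,1),((0,1),(-1,1),(0,0),(1,0)))]),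
    (((-1,1),(0,0),(0,1),(1,0)),[((0,1),((0,1),(0,0),(1,0),(-1,1)))]),
    (((0,0),(0,1),(-1,1),(1,0)),[((1,0),((1,0),(1,0),(1,0),(1,0))),((-1,1),((0,1),(1,0),(1,-1),(0,0)))]),
    (((0,0),(1,0),(0,1),(-1,1)),[((1,0),((1,0),(1,0),(1,0),(1,0))),((-1,1),((0,1),(0,0),(1,0),(1,-1)))]),
    (((0,0),(-1,1),(1,0),(0,1)),[((1,0),((1,0),(1,0),(1,0),(1,0))),((-1,1),((0,1),(1,-1),(0,0),(1,0)))]),
    (((1,0),(0,1),(0,0),(1,-1)),[((-1,1),((0,1),(1,0),(-1,1),(0,0))),((-1,1),((0,1),(-1,1),(0,0),(-1,0))),((-1,1),((0,1),(1,0),(1,-1),(0,0)))]),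
    (((1,0),(0,0),(-1,1),(0,-1)),[((-1,1),((0,1),(-1,1),(0,0),(-1,0))),((-1,1),((0,1),(0,0),(1,0),(1,-1))),((-1,1),((0,1),(1,-1),(0,0),(-1,0)))]),
    (((-1,1),(1,0),(0,0),(0,-1)),[((0,1),((0,1),(-1,1),(0,0),(-1,0)))]),
    (((-1,1),(0,0),(0,1),(-1,0)),[((0,1),((0,1),(0,0),(1,0),(1,-1)))]),
    (((0,0),(0,1),(-1,1),(-1,0)),[((1,0),((1,0),(1,0),(1,0),(-1,0))),((-1,1),((0,1),(1,0),(1,-1),(0,0)))]),
    (((0,0),(1,0),(0,1),(1,-1)),[((1,0),((1,0),(1,0),(1,0),(-1,0))),((-1,1),((0,1),(0,0),(1,0),(-1,1)))]),
    (((0,0),(-1,1),(1,0),(0,-1)),[((1,0),((1,0),(1,0),(1,0),(-1,0))),((-1,1),((0,1),(1,-1),(0,0),(-1,0)))]),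
    (((1,0),(-1,1),(0,-1),(0,0)),[((-1,1),((0,1),(1,0),(1,-1),(0,0))),((-1,1),((0,1),(0,0),(-1,0),(-1,1))),((-1,1),((0,1),(0,0),(-1,0),(1,-1)))]),
    (((1,0),(0,0),(1,-1),(0,1)),[((-1,1),((0,1),(-1,1),(0,0),(1,0))),((-1,1),((0,1),(0,0),(-1,0),(-1,1))),((-1,1),((0,1),(1,-1),(0,0),(1,0)))]),
    (((-1,1),(0,1),(-1,0),(0,0)),[((0,1),((0,1),(1,0),(1,-1),(0,0)))]),
    (((-1,1),(0,0),(0,-1),(1,0)),[((0,1),((0,1),(0,0),(-1,0),(-1,1)))]),
    (((0,0),(0,1),(1,-1),(1,0)),[((1,0),((1,0),(1,0),(-1,0),(1,0))),((-1,1),((0,1),(1,0),(-1,1),(0,0)))]),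
    (((0,0),(1,0),(0,-1),(-1,1)),[((1,0),((1,0),(1,0),(-1,0),(1,0))),((-1,1),((0,1),(0,0),(-1,0),(1,-1)))]),
    (((0,0),(-1,1),(-1,0),(0,1)),[((1,0),((1,0),(1,0),(-1,0),(1,0))),((-1,1),((0,1),(1,-1),(0,0),(1,0)))]),
    (((1,0),(0,0),(1,-1),(0,-1)),[((-1,1),((0,1),(-1,1),(0,0),(-1,0))),((-1,1),((0,1),(0,0),(-1,0),(1,-1))),((-1,1),((0,1),(1,-1),(0,0),(-1,0)))]),
    (((-1,1),(0,0),(0,-1),(-1,0)),[((0,1),((0,1),(0,0),(-1,0),(1,-1)))]),
    (((0,0),(0,1),(1,-1),(-1,0)),[((1,0),((1,0),(1,0),(-1,0),(-1,0))),((-1,1),((0,1),(1,0),(-1,1),(0,0)))]),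
    (((0,0),(1,0),(0,-1),(1,-1)),[((1,0),((1,0),(1,0),(-1,0),(-1,0))),((-1,1),((0,1),(0,0),(-1,0),(-1,1)))]),
    (((0,0),(-1,1),(-1,0),(0,-1)),[((1,0),((1,0),(1,0),(-1,0),(-1,0))),((-1,1),((0,1),(1,-1),(0,0),(-1,0)))]),
    (((1,0),(0,-1),(0,0),(-1,1)),[((-1,1),((0,1),(-1,0),(-1,1),(0,0))),((-1,1),((0,1),(1,-1),(0,0),(1,0))),((-1,1),((0,1),(-1,0),(1,-1),(0,0)))]),
    (((1,0),(1,-1),(0,1),(0,0)),[((-1,1),((0,1),(0,0),(1,0),(-1,1))),((-1,1),((0,1),(0,0),(1,0),(1,-1))),((-1,1),((0,1),(-1,0),(-1,1),(0,0)))]),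
    (((-1,1),(0,-1),(1,0),(0,0)),[((0,1),((0,1),(-1,0),(-1,1),(0,0)))]),
    (((-1,1),(-1,0),(0,0),(0,1)),[((0,1),((0,1),(1,-1),(0,0),(1,0)))]),
    (((0,0),(0,-1),(-1,1),(1,0)),[((1,0),((1,0),(-1,0),(1,0),(1,0))),((-1,1),((0,1),(-1,0),(1,-1),(0,0)))]),
    (((0,0),(-1,0),(0,1),(-1,1)),[((1,0),((1,0),(-1,0),(1,0),(1,0))),((-1,1),((0,1),(0,0),(1,0),(1,-1)))]),
    (((0,0),(1,-1),(1,0),(0,1)),[((1,0),((1,0),(-1,0),(1,0),(1,0))),((-1,1),((0,1),(-1,1),(0,0),(1,0)))]),
    (((1,0),(0,-1),(0,0),(1,-1)),[((-1,1),((0,1),(-1,0),(-1,1),(0,0))),((-1,1),((0,1),(1,-1),(0,0),(-1,0))),((-1,1),((0,1),(-1,0),(1,-1),(0,0)))]),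
    (((-1,1),(-1,0),(0,0),(0,-1)),[((0,1),((0,1),(1,-1),(0,0),(-1,0)))]),
    (((0,0),(0,-1),(-1,1),(-1,0)),[((1,0),((1,0),(-1,0),(1,0),(-1,0))),((-1,1),((0,1),(-1,0),(1,-1),(0,0)))]),
    (((0,0),(-1,0),(0,1),(1,-1)),[((1,0),((1,0),(-1,0),(1,0),(-1,0))),((-1,1),((0,1),(0,0),(1,0),(-1,1)))]),
    (((0,0),(1,-1),(1,0),(0,-1)),[((1,0),((1,0),(-1,0),(1,0),(-1,0))),((-1,1),((0,1),(-1,1),(0,0),(-1,0)))]),
    (((1,0),(1,-1),(0,-1),(0,0)),[((-1,1),((0,1),(0,0),(-1,0),(-1,1))),((-1,1),((0,1),(0,0),(-1,0),(1,-1))),((-1,1),((0,1),(-1,0),(1,-1),(0,0)))]),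
    (((-1,1),(0,-1),(-1,0),(0,0)),[((0,1),((0,1),(-1,0),(1,-1),(0,0)))]),
    (((0,0),(0,-1),(1,-1),(1,0)),[((1,0),((1,0),(-1,0),(-1,0),(1,0))),((-1,1),((0,1),(-1,0),(-1,1),(0,0)))]),
    (((0,0),(-1,0),(0,-1),(-1,1)),[((1,0),((1,0),(-1,0),(-1,0),(1,0))),((-1,1),((0,1),(0,0),(-1,0),(1,-1)))]),
    (((0,0),(1,-1),(-1,0),(0,1)),[((1,0),((1,0),(-1,0),(-1,0),(1,0))),((-1,1),((0,1),(-1,1),(0,0),(1,0)))]),
    (((0,0),(0,-1),(1,-1),(-1,0)),[((1,0),((1,0),(-1,0),(-1,0),(-1,0))),((-1,1),((0,1),(-1,0),(-1,1),(0,0)))]),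
    (((0,0),(-1,0),(0,-1),(1,-1)),[((1,0),((1,0),(-1,0),(-1,0),(-1,0))),((-1,1),((0,1),(0,0),(-1,0),(-1,1)))]),
    (((0,0),(1,-1),(-1,0),(0,-1)),[((1,0),((1,0),(-1,0),(-1,0),(-1,0))),((-1,1),((0,1),(-1,1),(0,0),(-1,0)))]),
    (((0,-1),(1,0),(-1,1),(0,0)),[((-1,1),((-1,1),(0,1),(1,0),(0,0)))]),
    (((0,-1),(-1,1),(0,0),(1,0)),[((-1,1),((-1,1),(1,0),(0,0),(0,1)))]),
    (((0,-1),(0,0),(1,0),(-1,1)),[((-1,1),((-1,1),(0,0),(0,1),(1,0)))]),
    (((-1,0),(0,1),(0,0),(-1,1)),[((1,0),((1,0),(0,1),(0,0),(-1,1)))]),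
    (((-1,0),(-1,1),(0,1),(0,0)),[((1,0),((1,0),(-1,1),(0,1),(0,0)))]),
    (((-1,0),(0,0),(-1,1),(0,1)),[((1,0),((1,0),(0,0),(-1,1),(0,1)))]),
    (((1,-1),(0,1),(1,0),(0,0)),[((-1,1),((0,1),(1,0),(-1,1),(0,0))),((-1,1),((-1,1),(0,1),(1,0),(0,0)))]),
    (((1,-1),(1,0),(0,0),(0,1)),[((-1,1),((0,1),(-1,1),(0,0),(1,0))),((-1,1),((-1,1),(1,0),(0,0),(0,1)))]),
    (((1,-1),(0,0),(0,1),(1,0)),[((-1,1),((0,1),(0,0),(1,0),(-1,1))),((-1,1),((-1,1),(0,0),(0,1),(1,0)))]),
    (((0,-1),(-1,1),(0,0),(-1,0)),[((-1,1),((-1,1),(1,0),(0,0),(0,-1)))]),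
    (((0,-1),(0,0),(1,0),(1,-1)),[((-1,1),((-1,1),(0,0),(0,1),(-1,0)))]),
    (((-1,0),(0,1),(0,0),(1,-1)),[((1,0),((1,0),(0,1),(0,0),(1,-1)))]),
    (((-1,0),(0,0),(-1,1),(0,-1)),[((1,0),((1,0),(0,0),(-1,1),(0,-1)))]),
    (((1,-1),(1,0),(0,0),(0,-1)),[((-1,1),((0,1),(-1,1),(0,0),(-1,0))),((-1,1),((-1,1),(1,0),(0,0),(0,-1)))]),
    (((1,-1),(0,0),(0,1),(-1,0)),[((-1,1),((0,1),(0,0),(1,0),(1,-1))),((-1,1),((-1,1),(0,0),(0,1),(-1,0)))]),
    (((0,-1),(1,0),(1,-1),(0,0)),[((-1,1),((-1,1),(0,1),(-1,0),(0,0)))]),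
    (((0,-1),(0,0),(-1,0),(-1,1)),[((-1,1),((-1,1),(0,0),(0,-1),(1,0)))]),
    (((-1,0),(-1,1),(0,-1),(0,0)),[((1,0),((1,0),(-1,1),(0,-1),(0,0)))]),
    (((-1,0),(0,0),(1,-1),(0,1)),[((1,0),((1,0),(0,0),(1,-1),(0,1)))]),
    (((1,-1),(0,1),(-1,0),(0,0)),[((-1,1),((0,1),(1,0),(1,-1),(0,0))),((-1,1),((-1,1),(0,1),(-1,0),(0,0)))]),
    (((1,-1),(0,0),(0,-1),(1,0)),[((-1,1),((0,1),(0,0),(-1,0),(-1,1))),((-1,1),((-1,1),(0,0),(0,-1),(1,0)))]),
    (((0,-1),(0,0),(-1,0),(1,-1)),[((-1,1),((-1,1),(0,0),(0,-1),(-1,0)))]),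
    (((-1,0),(0,0),(1,-1),(0,-1)),[((1,0),((1,0),(0,0),(1,-1),(0,-1)))]),
    (((1,-1),(0,0),(0,-1),(-1,0)),[((-1,1),((0,1),(0,0),(-1,0),(1,-1))),((-1,1),((-1,1),(0,0),(0,-1),(-1,0)))]),
    (((0,-1),(-1,0),(-1,1),(0,0)),[((-1,1),((-1,1),(0,-1),(1,0),(0,0)))]),
    (((0,-1),(1,-1),(0,0),(1,0)),[((-1,1),((-1,1),(-1,0),(0,0),(0,1)))]),
    (((-1,0),(0,-1),(0,0),(-1,1)),[((1,0),((1,0),(0,-1),(0,0),(-1,1)))]),
    (((-1,0),(1,-1),(0,1),(0,0)),[((1,0),((1,0),(1,-1),(0,1),(0,0)))]),
    (((1,-1),(0,-1),(1,0),(0,0)),[((-1,1),((0,1),(-1,0),(-1,1),(0,0))),((-1,1),((-1,1),(0,-1),(1,0),(0,0)))]),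
    (((1,-1),(-1,0),(0,0),(0,1)),[((-1,1),((0,1),(1,-1),(0,0),(1,0))),((-1,1),((-1,1),(-1,0),(0,0),(0,1)))]),
    (((0,-1),(1,-1),(0,0),(-1,0)),[((-1,1),((-1,1),(-1,0),(0,0),(0,-1)))]),
    (((-1,0),(0,-1),(0,0),(1,-1)),[((1,0),((1,0),(0,-1),(0,0),(1,-1)))]),
    (((1,-1),(-1,0),(0,0),(0,-1)),[((-1,1),((0,1),(1,-1),(0,0),(-1,0))),((-1,1),((-1,1),(-1,0),(0,0),(0,-1)))]),
    (((0,-1),(-1,0),(1,-1),(0,0)),[((-1,1),((-1,1),(0,-1),(-1,0),(0,0)))]),
    (((-1,0),(1,-1),(0,-1),(0,0)),[((1,0),((1,0),(1,-1),(0,-1),(0,0)))]),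
    (((1,-1),(0,-1),(-1,0),(0,0)),[((-1,1),((0,1),(-1,0),(1,-1),(0,0))),((-1,1),((-1,1),(0,-1),(-1,0),(0,0)))])]"

definition Vall1 :: "qv list" where
  "Vall1 = [((2,0),(0,0),(0,0),(0,0)), ((0,0),(2,0),(0,0),(0,0)), ((0,0),(0,0),(2,0),(0,0)), ((0,0),(0,0),(0,0),(2,0)), ((-2,0),(0,0),(0,0),(0,0)), ((0,0),(-2,0),(0,0),(0,0)), ((0,0),(0,0),(-2,0),(0,0)), ((0,0),(0,0),(0,0),(-2,0))]"

definition Vu :: "qv list" where "Vu = one # map fst bfsL"

definition zb :: "zp list" where "zb = [(0,1),(1,0),(-1,1),(0,0)]"
definition evl :: "nat list list" where
  "evl = [[0,1,2,3],[0,2,3,1],[0,3,1,2],[1,0,3,2],[1,2,0,3],[1,3,2,0],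
          [2,0,1,3],[2,1,3,0],[2,3,0,1],[3,0,2,1],[3,1,0,2],[3,2,1,0]]"
fun f3 :: "int \<Rightarrow> int \<Rightarrow> int \<Rightarrow> int \<Rightarrow> nat list \<Rightarrow> qv" where
  "f3 s0 s1 s2 s3 p = (zsm s0 (zb!(p!0)), zsm s1 (zb!(p!1)), zsm s2 (zb!(p!2)), zsm s3 (zb!(p!3)))"
definition Vall2 :: "qv list" where
  "Vall2 = [((a,0),(b,0),(c,0),(d,0)). a \<leftarrow> [1,-1], b \<leftarrow> [1,-1], c \<leftarrow> [1,-1], d \<leftarrow> [1,-1]]"
definition Vall3 :: "qv list" where
  "Vall3 = [f3 s0 s1 s2 s3 p. s0 \<leftarrow> [1,-1], s1 \<leftarrow> [1,-1], s2 \<leftarrow> [1,-1], s3 \<leftarrow> [1,-1], p \<leftarrow> evl]"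
definition Vall :: "qv list" where "Vall = Vall1 @ Vall2 @ Vall3"

fun bfsok :: "qv list \<Rightarrow> (qv \<times> bool \<times> qv) list \<Rightarrow> bool" where
  "bfsok seen [] = True"
| "bfsok seen ((c,f,p)#r) = (if p \<in> set seen \<and> qm (if f then qs else qt) p = qdbl c then bfsok (c#seen) r else False)"

definition genok :: "qv \<Rightarrow> bool" where
  "genok g = list_all (\<lambda>x. qdbl (qhalf (qm g x)) = qm g x \<and> qhalf (qm g x) \<in> set Vu) Vu"

definition okv :: "zp list" where "okv = [(0,1),(1,0),(-1,1),(0,0),(1,-1),(-1,0),(0,-1),(-2,0)]"

definition certok :: "qv \<Rightarrow> (zp \<times> qv) list \<Rightarrow> bool" where
  "certok x l = (list_all (\<lambda>(c,h). c \<in> set [(1,0),(0,1),(-1,1)] \<and> h \<in> set Vu) l \<and>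
      foldr (\<lambda>(c,h) acc. qadd (zsc c h) acc) l qzero = qadd one x \<and>
      foldr (\<lambda>(c,h) acc. zadd c acc) l (0,0) \<in> set [(0,0),(1,0),(0,1),(-1,1),(-2,2),(-3,3)])"

definition certchk :: "qv \<Rightarrow> bool" where
  "certchk x = (case map_of certL x of None \<Rightarrow> False | Some l \<Rightarrow> certok x l)"

definition chkS :: bool where
  "chkS = list_all (\<lambda>b. list_all (\<lambda>c. if c \<noteq> one \<and> zdot b c = (0,2) \<and> zdot one c \<noteq> (0,2)
      then list_all (\<lambda>d. if d \<noteq> b \<and> zdot c d = (0,2) then zdot b d = (0,2) else True) N1L else True) Vu) N1L"


lemma CK1: "list_all (\<lambda>x. x \<in> set Vall) Vu" by code_simp
lemma CK2: "list_all (\<lambda>x. x \<in> set Vu) Vall" by code_simp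
lemma CK3: "bfsok [one] bfsL" by code_simp
lemma CK4: "genok qs" "genok qt" by code_simp+
lemma CK5: "list_all (\<lambda>x. qcj x \<in> set Vu) Vu" by code_simp
lemma CK6: "list_all (\<lambda>x. zdot x x = (4,0)) Vu" by code_simp
lemma CK7: "list_all (\<lambda>x. x = one \<or> fst x \<in> set okv) Vu" by code_simp
lemma CK8: "list_all (\<lambda>x. x = one \<or> fst x = (0,1) \<or> certchk x) Vu" by code_simp
lemma CK9: "list_all (\<lambda>x. zdot one x \<noteq> (0,2) \<or> x \<in> set N1L) Vu" by code_simp
lemma CK10: "chkS" by code_simp
lemma CK11: "((-2,0),(0,0),(0,0),(0,0)) \<in> set Vu" "((0,0),(2,0),(0,0),(0,0)) \<in> set Vu"
  "((0,0),(0,0),(2,0),(0,0)) \<in> set Vu" "((0,0),(0,0),(0,0),(2,0)) \<in> set Vu" by code_simp+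

declare qI.simps[simp del] f3.simps[simp del]

lemma set_Vall_eq_Vu: "set Vall = set Vu"
  using CK1 CK2 by (auto simp: list_all_iff)

lemma zb_base: "k < 4 \<Longrightarrow> zr (zb!k) / 2 = [golden/2, 1/2, 1/(2*golden), 0] ! k"
  using inv_golden by (cases k; cases "k - 1"; cases "k - 2"; cases "k - 3") (auto simp: zb_def)

lemma evl_lt: "p \<in> set evl \<Longrightarrow> p!0 < 4 \<and> p!1 < 4 \<and> p!2 < 4 \<and> p!3 < 4"
  by (auto simp: evl_def)

lemma even_perms4_evl: "even_perms4 = set evl"
  by (simp add: even_perms4_def evl_def)

lemma qI_f3:
  assumes "p \<in> set evl"
  shows "qI (f3 s0 s1 s2 s3 p) =
    vec4 (of_int s0 * [golden/2, 1/2, 1/(2*golden), 0] ! (p!0))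
         (of_int s1 * [golden/2, 1/2, 1/(2*golden), 0] ! (p!1))
         (of_int s2 * [golden/2, 1/2, 1/(2*golden), 0] ! (p!2))
         (of_int s3 * [golden/2, 1/2, 1/(2*golden), 0] ! (p!3))"
  using evl_lt[OF assms] zb_base by (simp add: qI.simps f3.simps del: nth_Cons_numeral nth_Cons_0 nth_Cons_Suc)

lemma f3_in_V600:
  assumes "s0 \<in> {1,-1}" "s1 \<in> {1,-1}" "s2 \<in> {1,-1}" "s3 \<in> {1,-1}" "p \<in> set evl"
  shows "qI (f3 s0 s1 s2 s3 p) \<in> V600"
proof -
  have "qI (f3 s0 s1 s2 s3 p) \<in> {vec4 (s0 * base ! (p!0)) (s1 * base ! (p!1)) (s2 * base ! (p!2)) (s3 * base ! (p!3))
       | s0 s1 s2 s3 p base. s0 \<in> {1,-1} \<and> s1 \<in> {1,-1} \<and> s2 \<in> {1,-1} \<and> s3 \<in> {1,-1} \<and>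
         p \<in> even_perms4 \<and> base = [golden/2, 1/2, 1/(2*golden), 0]}"
    unfolding qI_f3[OF assms(5)] even_perms4_evl
    apply (rule CollectI)
    apply (rule exI[of _ "of_int s0"], rule exI[of _ "of_int s1"], rule exI[of _ "of_int s2"],
           rule exI[of _ "of_int s3"], rule exI[of _ p], rule exI[of _ "[golden/2, 1/2, 1/(2*golden), 0]"])
    using assms by auto
  then show ?thesis unfolding V600_def by blast
qed

lemma V2_in_V600:
  assumes "a \<in> {1/2,-1/2}" "b \<in> {1/2,-1/2}" "c \<in> {1/2,-1/2}" "d \<in> {1/2,-1/2}"
  shows "vec4 a b c d \<in> V600"
  using assms unfolding V600_def by blast

lemma V1_in_V600:
  assumes "s \<in> {1,-1}" "[a,b,c,d] \<in> {[1,0,0,0],[0,1,0,0],[0,0,1,0],[0,0,0,1]}"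
  shows "vec4 (s*a) (s*b) (s*c) (s*d) \<in> V600"
  using assms unfolding V600_def by blast

lemma Vall3_mem: "z \<in> set Vall3 \<longleftrightarrow> (\<exists>s0\<in>set [1,-1]. \<exists>s1\<in>set [1,-1]. \<exists>s2\<in>set [1,-1]. \<exists>s3\<in>set [1,-1]. \<exists>p\<in>set evl. z = f3 s0 s1 s2 s3 p)"
  unfolding Vall3_def by (simp only: set_concat set_map image_image UN_iff image_iff)

lemma Vall2_mem: "z \<in> set Vall2 \<longleftrightarrow> (\<exists>a\<in>set [1,-1]. \<exists>b\<in>set [1,-1]. \<exists>c\<in>set [1,-1]. \<exists>d\<in>set [1,-1]. z = ((a,0),(b,0),(c,0),(d,0)))"
  unfolding Vall2_def by (simp only: set_concat set_map image_image UN_iff image_iff set_simps(2) empty_set)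

lemma set_pm1: "set [1,-1::int] = {1,-1}" by simp

lemma Vall_sub: "qI ` set Vall \<subseteq> V600"
proof -
  have 1: "qI ` set Vall1 \<subseteq> V600"
    using V1_in_V600[of 1 1 0 0 0] V1_in_V600[of 1 0 1 0 0] V1_in_V600[of 1 0 0 1 0] V1_in_V600[of 1 0 0 0 1]
      V1_in_V600[of "-1" 1 0 0 0] V1_in_V600[of "-1" 0 1 0 0] V1_in_V600[of "-1" 0 0 1 0] V1_in_V600[of "-1" 0 0 0 1]
    by (simp add: Vall1_def qI.simps)
  have 2: "qI ` set Vall2 \<subseteq> V600"
    unfolding Vall2_def by (auto simp: qI.simps intro!: V2_in_V600)
  have 3: "qI ` set Vall3 \<subseteq> V600"
  proof
    fix y assume "y \<in> qI ` set Vall3"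
    then obtain z where z: "z \<in> set Vall3" "y = qI z" by blast
    then obtain s0 s1 s2 s3 p where "s0 \<in> {1,-1}" "s1 \<in> {1,-1}" "s2 \<in> {1,-1}" "s3 \<in> {1,-1}" "p \<in> set evl"
       "z = f3 s0 s1 s2 s3 p"
      using z(1) unfolding Vall3_mem set_pm1 by blast
    then show "y \<in> V600" using f3_in_V600 z by simp
  qed
  show ?thesis using 1 2 3 by (auto simp: Vall_def)
qed

lemma V600_sub: "V600 \<subseteq> qI ` set Vall"
proof
  fix x assume "x \<in> V600"
  then consider (A) s a b c d where "x = vec4 (s*a) (s*b) (s*c) (s*d)" "s \<in> {1, -1}"
         "[a,b,c,d] \<in> {[1,0,0,0],[0,1,0,0],[0,0,1,0],[0,0,0,1]}"
    | (B) a b c d where "x = vec4 a b c d" "a \<in> {1/2, -1/2}" "b \<in> {1/2, -1/2}" "c \<in> {1/2, -1/2}" "d \<in> {1/2, -1/2}"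
    | (C) s0 s1 s2 s3 p where "x = vec4 (s0 * [golden/2, 1/2, 1/(2*golden), 0] ! (p!0))
            (s1 * [golden/2, 1/2, 1/(2*golden), 0] ! (p!1)) (s2 * [golden/2, 1/2, 1/(2*golden), 0] ! (p!2))
            (s3 * [golden/2, 1/2, 1/(2*golden), 0] ! (p!3))"
         "s0 \<in> {1,-1}" "s1 \<in> {1,-1}" "s2 \<in> {1,-1}" "s3 \<in> {1,-1}" "p \<in> even_perms4"
    unfolding V600_def by blast
  then show "x \<in> qI ` set Vall"
  proof cases
    case A
    from A(2) have s: "s = 1 \<or> s = -1" by simp
    from A(3) have l: "(a=1 \<and> b=0 \<and> c=0 \<and> d=0) \<or> (a=0 \<and> b=1 \<and> c=0 \<and> d=0) \<or>
       (a=0 \<and> b=0 \<and> c=1 \<and> d=0) \<or> (a=0 \<and> b=0 \<and> c=0 \<and> d=1)" by simp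
    have "qI ` set Vall1 = {vec4 1 0 0 0, vec4 0 1 0 0, vec4 0 0 1 0, vec4 0 0 0 1,
                           vec4 (-1) 0 0 0, vec4 0 (-1) 0 0, vec4 0 0 (-1) 0, vec4 0 0 0 (-1)}"
      by (simp add: Vall1_def qI.simps)
    moreover have "x \<in> {vec4 1 0 0 0, vec4 0 1 0 0, vec4 0 0 1 0, vec4 0 0 0 1,
                           vec4 (-1) 0 0 0, vec4 0 (-1) 0 0, vec4 0 0 (-1) 0, vec4 0 0 0 (-1)}"
      using s l A(1) by (elim disjE conjE) simp_all
    ultimately have "x \<in> qI ` set Vall1" by simp
    then show ?thesis by (auto simp: Vall_def)
  next
    case B
    have h: "r \<in> {1/2, -1/2} \<Longrightarrow> \<exists>k::int. k \<in> {1,-1} \<and> r = of_int k / 2" for r :: real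
      by (auto intro: exI[of _ 1] exI[of _ "-1"])
    obtain a' b' c' d' where abcd: "a' \<in> {1,-1}" "b' \<in> {1,-1}" "c' \<in> {1,-1}" "d' \<in> {1,-1}"
      "a = of_int a'/2" "b = of_int b'/2" "c = of_int c'/2" "d = of_int d'/2"
      using h B by meson
    then have "x = qI ((a',0),(b',0),(c',0),(d',0))" "((a',0),(b',0),(c',0),(d',0)) \<in> set Vall2"
    proof -
      show "x = qI ((a',0),(b',0),(c',0),(d',0))" using B abcd by (simp add: qI.simps)
      show "((a',0),(b',0),(c',0),(d',0)) \<in> set Vall2" unfolding Vall2_mem set_pm1 using abcd by blast
    qed
    then show ?thesis by (auto simp: Vall_def)
  next
    case C
    have h: "r \<in> {1, -1} \<Longrightarrow> \<exists>k::int. k \<in> {1,-1} \<and> r = of_int k" for r :: real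
      by (auto intro: exI[of _ 1] exI[of _ "-1"])
    obtain a' b' c' d' where abcd: "a' \<in> {1,-1}" "b' \<in> {1,-1}" "c' \<in> {1,-1}" "d' \<in> {1,-1}"
      "s0 = of_int a'" "s1 = of_int b'" "s2 = of_int c'" "s3 = of_int d'"
      using h C by meson
    have p: "p \<in> set evl" using C even_perms4_evl by simp
    have "x = qI (f3 a' b' c' d' p)" using C abcd qI_f3[OF p] by simp
    moreover have "f3 a' b' c' d' p \<in> set Vall3" unfolding Vall3_mem set_pm1 using abcd p by blast
    ultimately have "x = qI (f3 a' b' c' d' p)" "f3 a' b' c' d' p \<in> set Vall3" by simp_all
    then show ?thesis by (auto simp: Vall_def)
  qed
qed

lemma V_eq: "V600 = qI ` set Vu"
  using Vall_sub V600_sub set_Vall_eq_Vu by blast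

lemma finite_V: "finite V600"
  by (simp add: V_eq)

lemma qI_one: "qI one = e1"
  by (simp add: one_def e1_def qI.simps)

lemma e1_V: "e1 \<in> V600"
  by (simp add: V_eq Vu_def qI_one[symmetric])

lemma V_norm: "x \<in> V600 \<Longrightarrow> inner x x = 1"
proof -
  assume "x \<in> V600"
  then obtain y where y: "y \<in> set Vu" "x = qI y" unfolding V_eq by blast
  then have "zdot y y = (4,0)" using CK6 by (simp add: list_all_iff)
  then show ?thesis using y by (simp add: inner_qI)
qed

lemma genok_closed: "genok g \<Longrightarrow> x \<in> V600 \<Longrightarrow> qmult (qI g) x \<in> V600"
proof -
  assume g: "genok g" and x: "x \<in> V600"
  then obtain y where y: "y \<in> set Vu" "x = qI y" by (auto simp: V_eq)
  with g have "qdbl (qhalf (qm g y)) = qm g y" "qhalf (qm g y) \<in> set Vu"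
    by (auto simp: genok_def list_all_iff)
  then have "qmult (qI g) (qI y) = qI (qhalf (qm g y))"
    by (intro qI_mult_half) simp
  then show ?thesis using y \<open>qhalf (qm g y) \<in> set Vu\<close> by (simp add: V_eq)
qed

definition Wset :: "(real^4) set" where "Wset = {u. \<forall>x\<in>V600. qmult u x \<in> V600}"

lemma W_step: "genok g \<Longrightarrow> u \<in> Wset \<Longrightarrow> qmult (qI g) u \<in> Wset"
  unfolding Wset_def using genok_closed by (simp add: qmult_assoc)

lemma bfs_W: "(\<forall>y\<in>set seen. qI y \<in> Wset) \<Longrightarrow> bfsok seen L \<Longrightarrow> (\<forall>e\<in>set L. qI (fst e) \<in> Wset)"
proof (induction L arbitrary: seen)
  case Nil
  then show ?case by simp
next
  case (Cons e r)
  obtain c f p where e: "e = (c,f,p)" by (metis prod_cases3)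
  from Cons.prems e have p: "p \<in> set seen" and m: "qm (if f then qs else qt) p = qdbl c" and r: "bfsok (c#seen) r"
    by (auto split: if_splits)
  have "qI c = qmult (qI (if f then qs else qt)) (qI p)" using qI_mult_half[OF m] by simp
  moreover have "genok (if f then qs else qt)" using CK4 by simp
  ultimately have c: "qI c \<in> Wset" using W_step p Cons.prems(1) by simp
  then have "\<forall>y\<in>set (c#seen). qI y \<in> Wset" using Cons.prems(1) by simp
  from Cons.IH[OF this r] c e show ?case by simp
qed

lemma V_closed: "u \<in> V600 \<Longrightarrow> x \<in> V600 \<Longrightarrow> qmult u x \<in> V600"
proof -
  assume u: "u \<in> V600" and x: "x \<in> V600"
  have "qI one \<in> Wset" by (simp add: qI_one Wset_def)
  then have "\<forall>e\<in>set bfsL. qI (fst e) \<in> Wset" using bfs_W[OF _ CK3] by simp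
  then have "\<forall>y\<in>set Vu. qI y \<in> Wset" using \<open>qI one \<in> Wset\<close> by (auto simp: Vu_def)
  with u x show ?thesis by (auto simp: V_eq Wset_def)
qed

lemma V_conj: "u \<in> V600 \<Longrightarrow> qconj u \<in> V600"
  using CK5 by (auto simp: V_eq list_all_iff qI_qcj[symmetric])

lemma conj_mult_V: "u \<in> V600 \<Longrightarrow> qmult (qconj u) u = e1"
  using qconj_mult V_norm by simp

lemma mult_conj_V: "u \<in> V600 \<Longrightarrow> qmult u (qconj u) = e1"
  using mult_qconj V_norm by simp

lemma T_inner: "u \<in> V600 \<Longrightarrow> inner (qmult (qconj u) x) (qmult (qconj u) y) = inner x y"
  using inner_qmult inner_qconj V_norm by simp

lemma T_back: "u \<in> V600 \<Longrightarrow> qmult u (qmult (qconj u) x) = x"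
  by (simp add: qmult_assoc[symmetric] mult_conj_V)

lemma T_V: "u \<in> V600 \<Longrightarrow> x \<in> V600 \<Longrightarrow> qmult (qconj u) x \<in> V600"
  by (simp add: V_closed V_conj)

lemma inner_e1: "inner e1 (qI x) = zr (fst x) / 2"
  by (cases x rule: qv_cases) (simp add: e1_def inner4 qI.simps)

lemma inner_e1_T: "u \<in> V600 \<Longrightarrow> inner e1 (qmult (qconj u) x) = inner u x"
  using T_inner[of u u x] conj_mult_V by simp

lemma okv_le: "c \<in> set okv \<Longrightarrow> zr c \<le> golden"
  using golden_bounds by (auto simp: okv_def)

lemma V_le: assumes "u \<in> V600" "x \<in> V600" "u \<noteq> x" shows "inner u x \<le> golden/2"
proof -
  have "qmult (qconj u) x \<in> V600" using assms T_V by simp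
  then obtain y where y: "y \<in> set Vu" "qmult (qconj u) x = qI y" by (auto simp: V_eq)
  have "y \<noteq> one"
  proof
    assume "y = one"
    then have "qmult (qconj u) x = e1" using y qI_one by simp
    then have "x = qmult u e1" using T_back[OF assms(1), of x] by simp
    then show False using assms by simp
  qed
  with CK7 y have "fst y \<in> set okv" by (auto simp: list_all_iff)
  then have "inner e1 (qI y) \<le> golden/2" using okv_le inner_e1 by (simp add: divide_right_mono)
  then show ?thesis using inner_e1_T[OF assms(1), of x] y by simp
qed

section \<open>Certificates and local structure\<close>

lemma foldr_qI: "qI (foldr (\<lambda>(c,h) acc. qadd (zsc c h) acc) l qzero) = sum_list (map (\<lambda>(c,h). zr c *\<^sub>R qI h) l)"
proof (induction l)
  case Nil
  then show ?case by (simp add: qI_zero)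
next
  case (Cons e l)
  obtain c h where e: "e = (c,h)" by (cases e) blast
  show ?case by (simp add: e qI_add qI_zsc Cons.IH)
qed

lemma foldr_zr: "zr (foldr (\<lambda>(c,h) acc. zadd c acc) l (0,0)) = sum_list (map (\<lambda>(c,h). zr c) l)"
  by (induction l) auto

lemma sum_le:
  assumes "\<forall>(c,h)\<in>set l. 0 \<le> zr c \<and> inner a (f h) \<le> b"
  shows "inner a (sum_list (map (\<lambda>(c,h). zr c *\<^sub>R f h) l)) \<le> sum_list (map (\<lambda>(c,h). zr c) l) * b"
  using assms
proof (induction l)
  case Nil
  then show ?case by simp
next
  case (Cons e l)
  obtain c h where e: "e = (c,h)" by (cases e) blast
  from Cons.prems e have c: "0 \<le> zr c" "inner a (f h) \<le> b" by auto
  have "inner a (zr c *\<^sub>R f h) \<le> zr c * b" using c by (simp add: mult_left_mono)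
  with Cons e show ?case by (simp add: inner_add_right algebra_simps)
qed

lemma qmult_zero_right: "qmult u 0 = 0"
  by (simp add: qmult_def vec4_eq_iff)

lemma qmult_sum_pairs: "qmult u (sum_list (map (\<lambda>(c,h). zr c *\<^sub>R qI h) l)) = sum_list (map (\<lambda>(c,h). zr c *\<^sub>R qmult u (qI h)) l)"
proof (induction l)
  case Nil
  then show ?case by (simp add: qmult_zero_right)
next
  case (Cons e l)
  obtain c h where e: "e = (c,h)" by (cases e) blast
  show ?case by (simp add: e qmult_add_right qmult_scaleR_right Cons.IH)
qed

lemma cert_bound:
  assumes u: "u \<in> V600" and w: "w \<in> V600" and uw: "u \<noteq> w" and na: "inner u w \<noteq> golden/2"
    and ab: "\<forall>z\<in>V600. inner a z \<le> b"
  shows "\<exists>C. 0 \<le> C \<and> C < 2 \<and> inner a u + inner a w \<le> C * b"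
proof -
  define g where "g = qmult (qconj u) w"
  have gV: "g \<in> V600" using u w T_V g_def by simp
  then obtain x where x: "x \<in> set Vu" "g = qI x" by (auto simp: V_eq)
  have "x \<noteq> one"
  proof
    assume "x = one"
    then have "g = e1" using x qI_one by simp
    then have "w = u" using T_back[OF u, of w] g_def by simp
    then show False using uw by simp
  qed
  moreover have "fst x \<noteq> (0,1)"
  proof
    assume "fst x = (0,1)"
    then have "inner e1 g = golden/2" using x inner_e1 by simp
    then show False using inner_e1_T[OF u, of w] g_def na by simp
  qed
  ultimately have "certchk x" using CK8 x by (auto simp: list_all_iff)
  then obtain l where l: "map_of certL x = Some l" "certok x l"
    by (auto simp: certchk_def split: option.splits)
  then have l1: "\<forall>(c,h)\<in>set l. c \<in> set [(1,0),(0,1),(-1,1)] \<and> h \<in> set Vu"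
    and l2: "foldr (\<lambda>(c,h) acc. qadd (zsc c h) acc) l qzero = qadd one x"
    and l3: "foldr (\<lambda>(c,h) acc. zadd c acc) l (0,0) \<in> set [(0,0),(1,0),(0,1),(-1,1),(-2,2),(-3,3)]"
    by (auto simp: certok_def list_all_iff)
  have "e1 + g = sum_list (map (\<lambda>(c,h). zr c *\<^sub>R qI h) l)"
    using arg_cong[OF l2, of qI] by (simp add: foldr_qI qI_add qI_one x)
  then have "qmult u (e1 + g) = sum_list (map (\<lambda>(c,h). zr c *\<^sub>R qmult u (qI h)) l)"
    by (simp add: qmult_sum_pairs)
  moreover have "qmult u (e1 + g) = u + w"
    by (simp add: qmult_add_right g_def T_back[OF u])
  ultimately have uw_eq: "u + w = sum_list (map (\<lambda>(c,h). zr c *\<^sub>R qmult u (qI h)) l)" by simp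
  have "\<forall>(c,h)\<in>set l. 0 \<le> zr c \<and> inner a (qmult u (qI h)) \<le> b"
  proof (intro ballI, clarify)
    fix c h assume "(c,h) \<in> set l"
    with l1 have c: "c \<in> set [(1,0),(0,1),(-1,1)]" and h: "h \<in> set Vu" by auto
    have "0 \<le> zr c" using c golden_bounds by auto
    moreover have "qmult u (qI h) \<in> V600" using V_closed[OF u] h by (simp add: V_eq)
    ultimately show "0 \<le> zr c \<and> inner a (qmult u (qI h)) \<le> b" using ab by blast
  qed
  from sum_le[OF this] uw_eq
  have "inner a (u + w) \<le> sum_list (map (\<lambda>(c,h). zr c) l) * b" by simp
  moreover have "sum_list (map (\<lambda>(c,h). zr c) l) \<ge> 0 \<and> sum_list (map (\<lambda>(c,h). zr c) l) < 2"
    using l3 foldr_zr[of l] golden_bounds by auto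
  ultimately show ?thesis by (auto simp: inner_add_right)
qed

lemma adjS_int:
  assumes "xb \<in> set Vu" "xc \<in> set Vu" "xd \<in> set Vu"
    "zdot one xb = (0,2)" "zdot one xd = (0,2)" "xb \<noteq> xd" "zdot xb xd \<noteq> (0,2)"
    "xc \<noteq> one" "zdot xb xc = (0,2)" "zdot xc xd = (0,2)"
  shows "zdot one xc = (0,2)"
proof (rule ccontr)
  assume nc: "zdot one xc \<noteq> (0,2)"
  have b: "xb \<in> set N1L" and d: "xd \<in> set N1L" using CK9 assms by (auto simp: list_all_iff)
  have "if xc \<noteq> one \<and> zdot xb xc = (0,2) \<and> zdot one xc \<noteq> (0,2)
      then list_all (\<lambda>d. if d \<noteq> xb \<and> zdot xc d = (0,2) then zdot xb d = (0,2) else True) N1L else True"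
    using CK10 b assms(2) unfolding chkS_def list_all_iff by blast
  then have "list_all (\<lambda>d. if d \<noteq> xb \<and> zdot xc d = (0,2) then zdot xb d = (0,2) else True) N1L"
    using assms nc by simp
  then have "if xd \<noteq> xb \<and> zdot xc xd = (0,2) then zdot xb xd = (0,2) else True"
    using d unfolding list_all_iff by blast
  then show False using assms by simp
qed

lemma adj_int: "inner (qI x) (qI y) = golden/2 \<longleftrightarrow> zdot x y = (0,2)"
proof
  assume "inner (qI x) (qI y) = golden/2"
  then have "zr (zdot x y) = zr (0,2)" by (simp add: inner_qI)
  then show "zdot x y = (0,2)" by (rule zr_inj)
qed (simp add: inner_qI)

lemma V_obtain: "y \<in> V600 \<Longrightarrow> \<exists>x. x \<in> set Vu \<and> y = qI x"
  unfolding V_eq by blast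

lemma adjS:
  assumes V: "a \<in> V600" "b \<in> V600" "c \<in> V600" "d \<in> V600"
    and ab: "inner a b = golden/2" and ad: "inner a d = golden/2" and bd: "b \<noteq> d" "inner b d \<noteq> golden/2"
    and ca: "c \<noteq> a" and bc: "inner b c = golden/2" and cd: "inner c d = golden/2"
  shows "inner a c = golden/2"
proof -
  define T where "T = qmult (qconj a)"
  have TV: "T y \<in> V600" if "y \<in> V600" for y using T_V V(1) that T_def by simp
  have Ti: "inner (T y) (T z) = inner y z" for y z using T_inner V(1) T_def by simp
  have Ta: "T a = qI one" using conj_mult_V V(1) T_def qI_one by simp
  have Tinj: "T y = T z \<Longrightarrow> y = z" for y z
  proof -
    assume "T y = T z"
    then have "qmult a (T y) = qmult a (T z)" by simp
    then show "y = z" using T_back[OF V(1)] T_def by simp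
  qed
  obtain xb where xb: "xb \<in> set Vu" "T b = qI xb" using V_obtain[OF TV[OF V(2)]] by blast
  obtain xc where xc: "xc \<in> set Vu" "T c = qI xc" using V_obtain[OF TV[OF V(3)]] by blast
  obtain xd where xd: "xd \<in> set Vu" "T d = qI xd" using V_obtain[OF TV[OF V(4)]] by blast
  have 1: "zdot one xb = (0,2)"
    using ab Ti[of a b] unfolding Ta xb(2) adj_int[symmetric] by simp
  have 2: "zdot one xd = (0,2)"
    using ad Ti[of a d] unfolding Ta xd(2) adj_int[symmetric] by simp
  have 3: "xb \<noteq> xd"
  proof
    assume "xb = xd"
    then have "T b = T d" using xb xd by simp
    then show False using Tinj bd(1) by blast
  qed
  have 4: "zdot xb xd \<noteq> (0,2)"
    using bd(2) Ti[of b d] unfolding xb(2) xd(2) adj_int[symmetric] by simp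
  have 5: "xc \<noteq> one"
  proof
    assume "xc = one"
    then have "T c = T a" using xc Ta by simp
    then show False using Tinj ca by blast
  qed
  have 6: "zdot xb xc = (0,2)"
    using bc Ti[of b c] unfolding xb(2) xc(2) adj_int[symmetric] by simp
  have 7: "zdot xc xd = (0,2)"
    using cd Ti[of c d] unfolding xc(2) xd(2) adj_int[symmetric] by simp
  have "zdot one xc = (0,2)" using adjS_int[OF xb(1) xc(1) xd(1) 1 2 3 4 5 6 7] .
  then have "inner (T a) (T c) = golden/2" unfolding Ta xc(2) adj_int .
  then show ?thesis using Ti[of a c] by simp
qed

section \<open>Characterisation of the complex\<close>

definition adj :: "real^4 \<Rightarrow> real^4 \<Rightarrow> bool" where "adj x y \<longleftrightarrow> inner x y = golden/2"

lemma adj_sym: "adj x y \<longleftrightarrow> adj y x"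
  by (simp add: adj_def inner_commute)

lemma units_V: "vec4 (-1) 0 0 0 \<in> V600" "vec4 0 1 0 0 \<in> V600" "vec4 0 0 1 0 \<in> V600" "vec4 0 0 0 1 \<in> V600"
proof -
  have "qI ((-2,0),(0,0),(0,0),(0,0)) \<in> V600" "qI ((0,0),(2,0),(0,0),(0,0)) \<in> V600"
       "qI ((0,0),(0,0),(2,0),(0,0)) \<in> V600" "qI ((0,0),(0,0),(0,0),(2,0)) \<in> V600"
    using CK11 unfolding V_eq by (auto intro: imageI)
  then show "vec4 (-1) 0 0 0 \<in> V600" "vec4 0 1 0 0 \<in> V600" "vec4 0 0 1 0 \<in> V600" "vec4 0 0 0 1 \<in> V600"
    by (simp_all add: qI.simps)
qed

lemma neg_V: "x \<in> V600 \<Longrightarrow> -x \<in> V600"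
proof -
  assume x: "x \<in> V600"
  have "qmult (vec4 (-1) 0 0 0) x = -x" by (simp add: qmult_def vec4_eq_iff)
  then show ?thesis using V_closed[OF units_V(1) x] by simp
qed

lemma hV: "V600 \<subseteq> convex hull V600"
  by (rule hull_subset)

lemma X600_char: "\<sigma> \<in> X600 \<longleftrightarrow> \<sigma> \<subseteq> V600 \<and> \<sigma> \<noteq> {} \<and> (\<forall>x\<in>\<sigma>. \<forall>y\<in>\<sigma>. x \<noteq> y \<longrightarrow> adj x y)"
proof
  assume "\<sigma> \<in> X600"
  then obtain F where F: "\<sigma> = V600 \<inter> F" "F face_of convex hull V600" "F \<noteq> {}" "F \<noteq> convex hull V600"
    unfolding X600_def by blast
  have sub: "\<sigma> \<subseteq> V600" using F by simp
  obtain S' where S': "S' \<subseteq> V600" "F = convex hull S'"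
    using face_of_convex_hull_subset[OF finite_imp_compact[OF finite_V] F(2)] by blast
  have "S' \<noteq> {}"
  proof
    assume "S' = {}"
    then have "F = {}" using S'(2) convex_hull_empty by simp
    then show False using F(3) by simp
  qed
  moreover have "S' \<subseteq> F" unfolding S'(2) by (rule hull_subset)
  then have "S' \<subseteq> \<sigma>" using S'(1) F(1) by blast
  ultimately have ne: "\<sigma> \<noteq> {}" by blast
  have "F exposed_face_of convex hull V600"
    using exposed_face_of_polyhedron[OF polyhedron_convex_hull[OF finite_V]] F(2) by simp
  then obtain a b where ab: "convex hull V600 \<subseteq> {z. inner a z \<le> b}" "F = convex hull V600 \<inter> {z. inner a z = b}"
    unfolding exposed_face_of_def by blast
  have aV: "\<forall>z\<in>V600. inner a z \<le> b" using ab(1) hV by blast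
  have cl: "adj x y" if xy: "x \<in> \<sigma>" "y \<in> \<sigma>" "x \<noteq> y" for x y
  proof (rule ccontr)
    assume na: "\<not> adj x y"
    have xV: "x \<in> V600" "y \<in> V600" using xy sub by auto
    have "inner a x = b" "inner a y = b" using xy F(1) ab(2) by auto
    with cert_bound[OF xV xy(3) na[unfolded adj_def] aV] obtain C where C: "0 \<le> C" "C < 2" "2 * b \<le> C * b"
      by auto
    have "(2 - C) * b \<le> 0" using C by (simp add: algebra_simps)
    then have b0: "b \<le> 0" using C(2) by (simp add: mult_le_0_iff)
    have az: "inner a z = 0" if "z \<in> V600" for z
    proof -
      have "inner a z \<le> 0" using aV that b0 by fastforce
      moreover have "inner a (-z) \<le> 0" using aV neg_V[OF that] b0 by fastforce
      ultimately show ?thesis by simp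
    qed
    have "a$1 = 0" using az[OF e1_V] by (simp add: inner4 e1_def)
    moreover have "a$2 = 0" "a$3 = 0" "a$4 = 0" using az[OF units_V(2)] az[OF units_V(3)] az[OF units_V(4)]
      by (simp_all add: inner4)
    ultimately have "a = 0" by (simp add: vec4_eq_iff)
    then have "b = 0" using \<open>inner a x = b\<close> by simp
    then have "F = convex hull V600" using ab(2) \<open>a = 0\<close> by auto
    then show False using F(4) by simp
  qed
  show "\<sigma> \<subseteq> V600 \<and> \<sigma> \<noteq> {} \<and> (\<forall>x\<in>\<sigma>. \<forall>y\<in>\<sigma>. x \<noteq> y \<longrightarrow> adj x y)"
    using sub ne cl by blast
next
  assume H: "\<sigma> \<subseteq> V600 \<and> \<sigma> \<noteq> {} \<and> (\<forall>x\<in>\<sigma>. \<forall>y\<in>\<sigma>. x \<noteq> y \<longrightarrow> adj x y)"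
  then have sub: "\<sigma> \<subseteq> V600" and ne: "\<sigma> \<noteq> {}" and cl: "\<And>x y. x \<in> \<sigma> \<Longrightarrow> y \<in> \<sigma> \<Longrightarrow> x \<noteq> y \<Longrightarrow> adj x y"
    by auto
  have fin: "finite \<sigma>" using sub finite_V finite_subset by blast
  define k where "k = real (card \<sigma>)"
  have k1: "k \<ge> 1" using fin ne by (simp add: k_def Suc_le_eq card_gt_0_iff)
  define a where "a = sum (\<lambda>u. u) \<sigma>"
  define m where "m = 1 + (k - 1) * (golden/2)"
  have inner_a: "inner a x = sum (\<lambda>u. inner u x) \<sigma>" for x
    by (simp add: a_def inner_sum_left)
  have in_sig: "inner a x = m" if "x \<in> \<sigma>" for x
  proof -
    have "inner a x = inner x x + sum (\<lambda>u. inner u x) (\<sigma> - {x})"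
      using inner_a[of x] sum.remove[OF fin that, of "\<lambda>u. inner u x"] by simp
    also have "sum (\<lambda>u. inner u x) (\<sigma> - {x}) = sum (\<lambda>u. golden/2) (\<sigma> - {x})"
      by (rule sum.cong) (use cl that in \<open>auto simp: adj_def\<close>)
    also have "\<dots> = (k - 1) * (golden/2)"
    proof -
      have "\<sigma> \<noteq> {}" using that by blast
      then have c0: "card \<sigma> \<ge> 1" using fin by (simp add: Suc_le_eq card_gt_0_iff)
      have "card (\<sigma> - {x}) = card \<sigma> - 1" using that by simp
      then have "real (card (\<sigma> - {x})) = k - 1" using c0 by (simp add: k_def of_nat_diff)
      then show ?thesis by simp
    qed
    finally show ?thesis using V_norm that sub m_def by auto
  qed
  have out_sig: "inner a x < m" if "x \<in> V600" "x \<notin> \<sigma>" for x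
  proof -
    have "inner a x \<le> sum (\<lambda>u. golden/2) \<sigma>"
      unfolding inner_a by (rule sum_mono) (use V_le sub that in blast)
    also have "\<dots> = k * (golden/2)" by (simp add: k_def)
    also have "\<dots> < m"
    proof -
      have "golden/2 < 1" using golden_bounds by simp
      then show ?thesis unfolding m_def left_diff_distrib by simp
    qed
    finally show ?thesis .
  qed
  have le: "\<forall>x\<in>convex hull V600. inner a x \<le> m"
  proof -
    have "V600 \<subseteq> {x. inner a x \<le> m}" using in_sig out_sig sub by fastforce
    then have "convex hull V600 \<subseteq> {x. inner a x \<le> m}"
      by (rule hull_minimal) (simp add: convex_halfspace_le)
    then show ?thesis by blast
  qed
  define F where "F = convex hull V600 \<inter> {x. inner a x = m}"
  have face: "F face_of convex hull V600"
    unfolding F_def by (rule face_of_Int_supporting_hyperplane_le) (use le in auto)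
  have sigF: "\<sigma> = V600 \<inter> F"
  proof
    show "\<sigma> \<subseteq> V600 \<inter> F" using sub in_sig hV unfolding F_def by blast
    show "V600 \<inter> F \<subseteq> \<sigma>" using out_sig unfolding F_def by fastforce
  qed
  have "F \<noteq> {}" using sigF ne by auto
  moreover have "F \<noteq> convex hull V600"
  proof -
    have "\<not> V600 \<subseteq> \<sigma>"
    proof
      assume "V600 \<subseteq> \<sigma>"
      then have "e1 \<in> \<sigma>" "-e1 \<in> \<sigma>" using e1_V neg_V by auto
      moreover have "e1 \<noteq> -e1" by (simp add: e1_def vec4_eq_iff)
      ultimately have "adj e1 (-e1)" using cl by blast
      then show False using golden_bounds by (simp add: adj_def e1_def inner4)
    qed
    then obtain x where "x \<in> V600" "x \<notin> \<sigma>" by blast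
    then have "x \<in> convex hull V600" "x \<notin> F" using out_sig hV unfolding F_def by (blast, fastforce)
    then show ?thesis by blast
  qed
  ultimately show "\<sigma> \<in> X600" unfolding X600_def using face sigF by blast
qed

lemma edge_X600: "{x, y} \<in> X600 \<longleftrightarrow> x \<in> V600 \<and> y \<in> V600 \<and> (x \<noteq> y \<longrightarrow> adj x y)"
  by (auto simp: X600_char adj_sym)

lemma cedge_X580: "cedge (X580 v) x y \<longleftrightarrow> x \<noteq> y \<and> x \<in> V600 \<and> y \<in> V600 \<and> adj x y \<and> x \<noteq> v \<and> y \<noteq> v"
  by (auto simp: cedge_def X580_def edge_X600)

lemma cverts_X580: "cverts (X580 v) = V600 - {v}"
proof
  show "cverts (X580 v) \<subseteq> V600 - {v}" by (auto simp: cverts_def X580_def X600_char)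
  show "V600 - {v} \<subseteq> cverts (X580 v)"
  proof
    fix x assume "x \<in> V600 - {v}"
    then have "{x} \<in> X580 v" by (auto simp: X580_def X600_char)
    then show "x \<in> cverts (X580 v)" by (auto simp: cverts_def)
  qed
qed

lemma cverts_bdry: "v \<in> V600 \<Longrightarrow> cverts (bdry580 v) = {x \<in> V600. x \<noteq> v \<and> adj v x}"
proof
  show "cverts (bdry580 v) \<subseteq> {x \<in> V600. x \<noteq> v \<and> adj v x}"
    by (auto simp: cverts_def bdry580_def X600_char)
  assume "v \<in> V600"
  show "{x \<in> V600. x \<noteq> v \<and> adj v x} \<subseteq> cverts (bdry580 v)"
  proof
    fix x assume x: "x \<in> {x \<in> V600. x \<noteq> v \<and> adj v x}"
    then have "{x} \<in> bdry580 v" using \<open>v \<in> V600\<close> by (auto simp: bdry580_def X600_char adj_sym)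
    then show "x \<in> cverts (bdry580 v)" by (auto simp: cverts_def)
  qed
qed

lemma adjS': "a \<in> V600 \<Longrightarrow> b \<in> V600 \<Longrightarrow> c \<in> V600 \<Longrightarrow> d \<in> V600 \<Longrightarrow> adj a b \<Longrightarrow> adj a d \<Longrightarrow>
   b \<noteq> d \<Longrightarrow> \<not> adj b d \<Longrightarrow> c \<noteq> a \<Longrightarrow> adj b c \<Longrightarrow> adj c d \<Longrightarrow> adj a c"
  unfolding adj_def by (rule adjS)

lemma X580_mem: "\<sigma> \<in> X580 v \<longleftrightarrow> \<sigma> \<in> X600 \<and> v \<notin> \<sigma>"
  by (simp add: X580_def)

lemma bdry_mem: "\<sigma> \<in> bdry580 v \<longleftrightarrow> \<sigma> \<in> X600 \<and> v \<notin> \<sigma> \<and> insert v \<sigma> \<in> X600"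
  by (simp add: bdry580_def)

theorem lemma4p8:
  assumes "v \<in> V600"
  shows "flag_no_square (X580 v) \<and> three_convex (bdry580 v) (X580 v)"
proof -
  have vV: "v \<in> V600" using assms .
  have flag: "flag_complex (X580 v)"
    unfolding flag_complex_def
  proof (intro allI impI)
    fix S assume S: "finite S \<and> S \<noteq> {} \<and> S \<subseteq> cverts (X580 v) \<and> (\<forall>u\<in>S. \<forall>w\<in>S. u \<noteq> w \<longrightarrow> cedge (X580 v) u w)"
    then have S1: "S \<subseteq> V600 - {v}" using cverts_X580 by simp
    have S2: "\<forall>u\<in>S. \<forall>w\<in>S. u \<noteq> w \<longrightarrow> adj u w"
    proof (intro ballI impI)
      fix u w assume "u \<in> S" "w \<in> S" "u \<noteq> w"
      then have "cedge (X580 v) u w" using S by blast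
      then show "adj u w" unfolding cedge_X580 by blast
    qed
    have "S \<in> X600" unfolding X600_char using S1 S2 S by blast
    moreover have "v \<notin> S" using S1 by blast
    ultimately show "S \<in> X580 v" unfolding X580_mem by blast
  qed
  have nsq: "no_square (X580 v)"
    unfolding no_square_def
  proof (intro allI impI)
    fix a b c d
    assume H: "distinct [a, b, c, d] \<and> cedge (X580 v) a b \<and> cedge (X580 v) b c \<and> cedge (X580 v) c d \<and> cedge (X580 v) d a"
    then have e1: "cedge (X580 v) a b" and e2: "cedge (X580 v) b c" and e3: "cedge (X580 v) c d"
      and e4: "cedge (X580 v) d a" and dist: "distinct [a,b,c,d]" by blast+
    from e1 have V1: "a \<in> V600" "b \<in> V600" "a \<noteq> v" "b \<noteq> v" "adj a b" unfolding cedge_X580 by blast+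
    from e3 have V2: "c \<in> V600" "d \<in> V600" "c \<noteq> v" "d \<noteq> v" "adj c d" unfolding cedge_X580 by blast+
    from e2 have bc: "adj b c" unfolding cedge_X580 by blast
    from e4 have da: "adj a d" unfolding cedge_X580 adj_sym[of d a] by blast
    have ne: "a \<noteq> c" "b \<noteq> d" using dist by auto
    show "cedge (X580 v) a c \<or> cedge (X580 v) b d"
    proof (cases "adj b d")
      case True
      then have "cedge (X580 v) b d" unfolding cedge_X580 using V1 V2 ne by blast
      then show ?thesis by blast
    next
      case False
      have "adj a c" using adjS'[OF V1(1) V1(2) V2(1) V2(2) V1(5) da ne(2) False _ bc V2(5)] ne(1) by blast
      then have "cedge (X580 v) a c" unfolding cedge_X580 using V1 V2 ne by blast
      then show ?thesis by blast
    qed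
  qed
  have CB: "cverts (bdry580 v) = {x \<in> V600. x \<noteq> v \<and> adj v x}" using cverts_bdry[OF vV] .
  have full: "full_subcomplex (bdry580 v) (X580 v)"
    unfolding full_subcomplex_def
  proof
    show "bdry580 v \<subseteq> X580 v" unfolding bdry580_def X580_def by blast
    show "\<forall>\<sigma>\<in>X580 v. \<sigma> \<subseteq> cverts (bdry580 v) \<longrightarrow> \<sigma> \<in> bdry580 v"
    proof (intro ballI impI)
      fix \<sigma> assume s: "\<sigma> \<in> X580 v" "\<sigma> \<subseteq> cverts (bdry580 v)"
      then have s1: "\<sigma> \<in> X600" "v \<notin> \<sigma>" unfolding X580_mem by blast+
      from s1(1) have s3: "\<sigma> \<subseteq> V600" "\<forall>x\<in>\<sigma>. \<forall>y\<in>\<sigma>. x \<noteq> y \<longrightarrow> adj x y" unfolding X600_char by blast+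
      have s2: "\<forall>x\<in>\<sigma>. adj v x" using s(2) CB by blast
      have "insert v \<sigma> \<subseteq> V600" using s3 vV by blast
      moreover have "\<forall>x\<in>insert v \<sigma>. \<forall>y\<in>insert v \<sigma>. x \<noteq> y \<longrightarrow> adj x y"
        using s2 s3(2) adj_sym by blast
      ultimately have "insert v \<sigma> \<in> X600" unfolding X600_char by blast
      then show "\<sigma> \<in> bdry580 v" using s1 unfolding bdry_mem by blast
    qed
  qed
  have conv: "\<forall>u w x. u \<in> cverts (bdry580 v) \<and> w \<in> cverts (bdry580 v) \<and> dist2 (X580 v) u w \<and>
      cedge (X580 v) u x \<and> cedge (X580 v) x w
      \<longrightarrow> x \<in> cverts (bdry580 v) \<and> cedge (bdry580 v) u x \<and> cedge (bdry580 v) x w"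
  proof (intro allI impI)
    fix u w x
    assume H: "u \<in> cverts (bdry580 v) \<and> w \<in> cverts (bdry580 v) \<and> dist2 (X580 v) u w \<and>
      cedge (X580 v) u x \<and> cedge (X580 v) x w"
    then have u: "u \<in> V600" "u \<noteq> v" "adj v u" and w: "w \<in> V600" "w \<noteq> v" "adj v w"
      using CB by blast+
    from H have d2: "dist2 (X580 v) u w" by blast
    then have uw: "u \<noteq> w" "\<not> cedge (X580 v) u w" unfolding dist2_def by blast+
    then have nuw: "\<not> adj u w" unfolding cedge_X580 using u w by blast
    from H have ux: "cedge (X580 v) u x" and xw: "cedge (X580 v) x w" by blast+
    from ux have x: "x \<in> V600" "x \<noteq> v" "adj u x" "x \<noteq> u" unfolding cedge_X580 by blast+
    from xw have x2: "adj x w" "x \<noteq> w" unfolding cedge_X580 by blast+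
    have "adj v x" using adjS'[OF vV u(1) x(1) w(1) u(3) w(3) uw(1) nuw x(2) x(3) x2(1)] .
    then have xc: "x \<in> cverts (bdry580 v)" using CB x by blast
    have b1: "{u, x} \<in> bdry580 v"
    proof -
      have "{u,x} \<in> X600" unfolding X600_char using u x adj_sym by blast
      moreover have "insert v {u,x} \<in> X600" unfolding X600_char using u x vV \<open>adj v x\<close> adj_sym by auto
      ultimately show ?thesis unfolding bdry_mem using u x by blast
    qed
    have b2: "{x, w} \<in> bdry580 v"
    proof -
      have "{x,w} \<in> X600" unfolding X600_char using w x x2 adj_sym by blast
      moreover have "insert v {x,w} \<in> X600" unfolding X600_char using w x x2 vV \<open>adj v x\<close> adj_sym by auto
      ultimately show ?thesis unfolding bdry_mem using w x by blast
    qed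
    show "x \<in> cverts (bdry580 v) \<and> cedge (bdry580 v) u x \<and> cedge (bdry580 v) x w"
      using xc b1 b2 x x2 unfolding cedge_def by blast
  qed
  show ?thesis using flag nsq full conv
    unfolding flag_no_square_def three_convex_def by blast
qed

end
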